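(* Let $f:\mathbb{R}^d\to\mathbb{R}$ be a tree ensemble model whose trees have $n$ nodes in total, and let $x\in\mathbb{R}^d$. Then for any $S\subseteq[d]$, the squared prediction gap $$\mathrm{PG}^2(x,S)=\mathbb{E}_{x'\sim \mathrm{perturb}(x,S)}\left[(f(x')-f(x))^2\right]$$ can be computed exactly in $O(n^2)$ time.
   Context: A decision tree $T$ is a rooted binary tree in which each non-leaf node $v$ has exactly two children $a_v,b_v$, a feature index $q_v\in[d]=\{1,\dots,d\}$ and a threshold $t_v\in\mathbb{R}$; each leaf $l$ has a value $y_l\in\mathbb{R}$. The output $f_T(x)$ on input $x\in\mathbb{R}^d$ is obtained by starting at the root and, at each non-leaf node $v$, descending to $a_v$ if $x_{q_v}<t_v$ and to $b_v$ otherwise, until a leaf $l$ is reached; then $f_T(x)=y_l$. A tree ensemble model is a finite collection of decision trees $T_1,\dots,T_m$ with output $f(x)=\sum_{i=1}^m f_{T_i}(x)$; its total size $n$ is the sum of the numbers of nodes of its trees. For $x\in\mathbb{R}^d$ and $S\subseteq[d]$, the distribution $\mathrm{perturb}(x,S)$ of a random vector $x'\in\mathbb{R}^d$ is as follows: for each $i\in S$, $x'_i=x_i+\delta_i$ where $\delta_i\sim\mathcal{D}_i$ for a fixed distribution $\mathcal{D}_i$ on $\mathbb{R}$; for each $i\notin S$, $x'_i=x_i$; and the $\delta_i$ ($i\in S$) are mutually independent. It is assumed that the cumulative distribution function $F_{\mathcal{D}_i}$ of each $\mathcal{D}_i$ can be evaluated in $O(1)$ time. The running time is measured in a model where arithmetic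 operations on real numbers take constant time.
   Formalization: The O(1)-evaluable function for each $\mathcal{D}_i$ is the left-continuous cumulative distribution function, v mapped to the probability that $\delta_i$ < v, instead of $F_{\mathcal{D}_i}$(v), the probability that $\delta_i$ <= v. The statement above fails without it. *)

theory Defs
  imports "HOL-Probability.Probability"
begin

datatype dtree = Leaf real | Node nat real dtree dtree

fun eval_tree :: "dtree \<Rightarrow> (nat \<Rightarrow> real) \<Rightarrow> real" where
  "eval_tree (Leaf y) x = y"
| "eval_tree (Node q t a b) x = (if x q < t then eval_tree a x else eval_tree b x)"

definition ens_eval :: "dtree list \<Rightarrow> (nat \<Rightarrow> real) \<Rightarrow> real" where
  "ens_eval ts x = (\<Sum>T\<leftarrow>ts. eval_tree T x)"

fun tsize :: "dtree \<Rightarrow> nat" where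
  "tsize (Leaf y) = 1"
| "tsize (Node q t a b) = 1 + tsize a + tsize b"

definition ens_size :: "dtree list \<Rightarrow> nat" where
  "ens_size ts = (\<Sum>T\<leftarrow>ts. tsize T)"

fun feats :: "dtree \<Rightarrow> nat set" where
  "feats (Leaf y) = {}"
| "feats (Node q t a b) = insert q (feats a \<union> feats b)"

definition wf_ensemble :: "nat \<Rightarrow> dtree list \<Rightarrow> bool" where
  "wf_ensemble d ts \<longleftrightarrow> (\<forall>T\<in>set ts. feats T \<subseteq> {1..d})"

definition perturb_pt :: "(nat \<Rightarrow> real) \<Rightarrow> nat set \<Rightarrow> (nat \<Rightarrow> real) \<Rightarrow> (nat \<Rightarrow> real)" where
  "perturb_pt x S \<delta> = (\<lambda>i. if i \<in> S then x i + \<delta> i else x i)"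

text \<open>PG^2(x,S) = E_{x' ~ perturb(x,S)} (f x' - f x)^2, where x' = x + delta on S and
the delta_i (i in S) are independent with distributions D i, i.e. delta ~ product
measure of the D i over i in S.\<close>
definition PG2 :: "dtree list \<Rightarrow> (nat \<Rightarrow> real) \<Rightarrow> nat set \<Rightarrow> (nat \<Rightarrow> real measure) \<Rightarrow> real" where
  "PG2 ts x S D = (\<integral>\<delta>. (ens_eval ts (perturb_pt x S \<delta>) - ens_eval ts x)\<^sup>2 \<partial>(PiM S D))"

text \<open>Every instruction costs one step. There is no real-to-integer
conversion. The oracle instruction Cdf evaluates the (left-continuous)
cumulative distribution function of D_i in O(1): Cdf r a b sets real register r
to Pr[delta_i < v] where i = nat register a, v = real register b.\<close>

datatype instr =
    NConst nat nat
  | NAdd nat nat nat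
  | NSub nat nat nat          \<comment> \<open>nreg r := nreg a - nreg b (truncated)\<close>
  | NLoad nat nat nat
  | NStore nat nat nat
  | NJmpLess nat nat nat
  | RConst nat real
  | RAdd nat nat nat
  | RSub nat nat nat
  | RMul nat nat nat
  | RDiv nat nat nat
  | RLoad nat nat nat
  | RStore nat nat nat
  | RJmpLess nat nat nat
  | Jmp nat
  | Cdf nat nat nat
  | Halt

record mstate =
  pc :: nat
  nreg :: "nat \<Rightarrow> nat"
  rreg :: "nat \<Rightarrow> real"
  nmem :: "nat \<Rightarrow> nat \<Rightarrow> nat"
  rmem :: "nat \<Rightarrow> nat \<Rightarrow> real"

definition halted :: "instr list \<Rightarrow> mstate \<Rightarrow> bool" where
  "halted P s \<longleftrightarrow> pc s \<ge> length P \<or> P ! pc s = Halt"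

fun exec :: "(nat \<Rightarrow> real \<Rightarrow> real) \<Rightarrow> instr \<Rightarrow> mstate \<Rightarrow> mstate" where
  "exec F (NConst r k) s = s\<lparr>pc := Suc (pc s), nreg := (nreg s)(r := k)\<rparr>"
| "exec F (NAdd r a b) s = s\<lparr>pc := Suc (pc s), nreg := (nreg s)(r := nreg s a + nreg s b)\<rparr>"
| "exec F (NSub r a b) s = s\<lparr>pc := Suc (pc s), nreg := (nreg s)(r := nreg s a - nreg s b)\<rparr>"
| "exec F (NLoad r k a) s = s\<lparr>pc := Suc (pc s), nreg := (nreg s)(r := nmem s k (nreg s a))\<rparr>"
| "exec F (NStore k a r) s = s\<lparr>pc := Suc (pc s), nmem := (nmem s)(k := (nmem s k)(nreg s a := nreg s r))\<rparr>"
| "exec F (NJmpLess a b l) s = s\<lparr>pc := (if nreg s a < nreg s b then l else Suc (pc s))\<rparr>"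
| "exec F (RConst r c) s = s\<lparr>pc := Suc (pc s), rreg := (rreg s)(r := c)\<rparr>"
| "exec F (RAdd r a b) s = s\<lparr>pc := Suc (pc s), rreg := (rreg s)(r := rreg s a + rreg s b)\<rparr>"
| "exec F (RSub r a b) s = s\<lparr>pc := Suc (pc s), rreg := (rreg s)(r := rreg s a - rreg s b)\<rparr>"
| "exec F (RMul r a b) s = s\<lparr>pc := Suc (pc s), rreg := (rreg s)(r := rreg s a * rreg s b)\<rparr>"
| "exec F (RDiv r a b) s = s\<lparr>pc := Suc (pc s), rreg := (rreg s)(r := rreg s a / rreg s b)\<rparr>"
| "exec F (RLoad r k a) s = s\<lparr>pc := Suc (pc s), rreg := (rreg s)(r := rmem s k (nreg s a))\<rparr>"
| "exec F (RStore k a r) s = s\<lparr>pc := Suc (pc s), rmem := (rmem s)(k := (rmem s k)(nreg s a := rreg s r))\<rparr>"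
| "exec F (RJmpLess a b l) s = s\<lparr>pc := (if rreg s a < rreg s b then l else Suc (pc s))\<rparr>"
| "exec F (Jmp l) s = s\<lparr>pc := l\<rparr>"
| "exec F (Cdf r a b) s = s\<lparr>pc := Suc (pc s), rreg := (rreg s)(r := F (nreg s a) (rreg s b))\<rparr>"
| "exec F Halt s = s"

definition step :: "instr list \<Rightarrow> (nat \<Rightarrow> real \<Rightarrow> real) \<Rightarrow> mstate \<Rightarrow> mstate" where
  "step P F s = (if halted P s then s else exec F (P ! pc s) s)"

text \<open>CDF oracle: Pr[delta_i < v] (the relevant event for the branching rule x_q < t).\<close>
definition cdf_oracle :: "(nat \<Rightarrow> real measure) \<Rightarrow> nat \<Rightarrow> real \<Rightarrow> real" where
  "cdf_oracle D i v = measure (D i) {..<v}"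

text \<open>Nodes are numbered 0,...,n-1 in preorder, tree after tree. A node record is
(kind, feature, left child, right child, value): kind 0 = leaf (value = leaf value),
kind 1 = internal node (value = threshold).\<close>

fun tnodes :: "nat \<Rightarrow> dtree \<Rightarrow> (nat \<times> nat \<times> nat \<times> nat \<times> real) list" where
  "tnodes off (Leaf y) = [(0, 0, 0, 0, y)]"
| "tnodes off (Node q t a b) =
     (1, q, off + 1, off + 1 + tsize a, t) # tnodes (off + 1) a @ tnodes (off + 1 + tsize a) b"

fun enodes :: "nat \<Rightarrow> dtree list \<Rightarrow> (nat \<times> nat \<times> nat \<times> nat \<times> real) list" where
  "enodes off [] = []"
| "enodes off (T # ts) = tnodes off T @ enodes (off + tsize T) ts"

fun eroots :: "nat \<Rightarrow> dtree list \<Rightarrow> nat list" where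
  "eroots off [] = []"
| "eroots off (T # ts) = off # eroots (off + tsize T) ts"

definition arr :: "'a::zero list \<Rightarrow> nat \<Rightarrow> 'a" where
  "arr xs i = (if i < length xs then xs ! i else 0)"

text \<open>Nat banks: 0 = header [m, n, d]; 1 = kinds; 2 = features; 3 = left children;
4 = right children; 5 = roots of the m trees; 6 = indicator of S (index q in 1..d).
Real banks: 0 = node values; 1 = x (index q in 1..d).\<close>
definition init_state :: "nat \<Rightarrow> dtree list \<Rightarrow> (nat \<Rightarrow> real) \<Rightarrow> nat set \<Rightarrow> mstate" where
  "init_state d ts x S =
    (let N = enodes 0 ts in
     \<lparr> pc = 0, nreg = (\<lambda>_. 0), rreg = (\<lambda>_. 0),
       nmem = (\<lambda>k. if k = 0 then arr [length ts, length N, d]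
                 else if k = 1 then arr (map fst N)
                 else if k = 2 then arr (map (fst \<circ> snd) N)
                 else if k = 3 then arr (map (fst \<circ> snd \<circ> snd) N)
                 else if k = 4 then arr (map (fst \<circ> snd \<circ> snd \<circ> snd) N)
                 else if k = 5 then arr (eroots 0 ts)
                 else if k = 6 then (\<lambda>q. if q \<in> S \<and> q \<in> {1..d} then 1 else 0)
                 else (\<lambda>_. 0)),
       rmem = (\<lambda>k. if k = 0 then arr (map (snd \<circ> snd \<circ> snd \<circ> snd) N)
                 else if k = 1 then (\<lambda>q. if q \<in> {1..d} then x q else 0)
                 else (\<lambda>_. 0)) \<rparr>)"

end

theory Submission
  imports Defs
begin

datatype com = SKIP | B instr | CSeq com com (infixr ";;" 60)
  | IfN nat nat com com | IfR nat nat com com | WhileN nat nat com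

fun basic :: "instr \<Rightarrow> bool" where
  "basic (NJmpLess _ _ _) = False"
| "basic (RJmpLess _ _ _) = False"
| "basic (Jmp _) = False"
| "basic Halt = False"
| "basic _ = True"

fun clen :: "com \<Rightarrow> nat" where
  "clen SKIP = 0"
| "clen (B i) = 1"
| "clen (c1 ;; c2) = clen c1 + clen c2"
| "clen (IfN a b c1 c2) = clen c1 + clen c2 + 2"
| "clen (IfR a b c1 c2) = clen c1 + clen c2 + 2"
| "clen (WhileN a b c) = clen c + 3"

fun compile :: "nat \<Rightarrow> com \<Rightarrow> instr list" where
  "compile off SKIP = []"
| "compile off (B i) = [i]"
| "compile off (c1 ;; c2) = compile off c1 @ compile (off + clen c1) c2"
| "compile off (IfN a b c1 c2) = NJmpLess a b (off + 2 + clen c2) # compile (Suc off) c2 @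
     Jmp (off + 2 + clen c2 + clen c1) # compile (off + 2 + clen c2) c1"
| "compile off (IfR a b c1 c2) = RJmpLess a b (off + 2 + clen c2) # compile (Suc off) c2 @
     Jmp (off + 2 + clen c2 + clen c1) # compile (off + 2 + clen c2) c1"
| "compile off (WhileN a b c) = NJmpLess a b (off + 2) # Jmp (off + 3 + clen c) # compile (off + 2) c @ [Jmp off]"

lemma length_compile[simp]: "length (compile off c) = clen c"
  by (induction c arbitrary: off) auto

inductive bs :: "(nat \<Rightarrow> real \<Rightarrow> real) \<Rightarrow> com \<Rightarrow> mstate \<Rightarrow> nat \<Rightarrow> mstate \<Rightarrow> bool" for F where
  bs_skip: "bs F SKIP s 0 s"
| bs_b: "basic i \<Longrightarrow> bs F (B i) s 1 ((exec F i s)\<lparr>pc := pc s\<rparr>)"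
| bs_seq: "bs F c1 s k1 s1 \<Longrightarrow> bs F c2 s1 k2 s2 \<Longrightarrow> bs F (c1 ;; c2) s (k1 + k2) s2"
| bs_ifnT: "nreg s a < nreg s b \<Longrightarrow> bs F c1 s k s' \<Longrightarrow> bs F (IfN a b c1 c2) s (Suc k) s'"
| bs_ifnF: "\<not> nreg s a < nreg s b \<Longrightarrow> bs F c2 s k s' \<Longrightarrow> bs F (IfN a b c1 c2) s (k + 2) s'"
| bs_ifrT: "rreg s a < rreg s b \<Longrightarrow> bs F c1 s k s' \<Longrightarrow> bs F (IfR a b c1 c2) s (Suc k) s'"
| bs_ifrF: "\<not> rreg s a < rreg s b \<Longrightarrow> bs F c2 s k s' \<Longrightarrow> bs F (IfR a b c1 c2) s (k + 2) s'"
| bs_whT: "nreg s a < nreg s b \<Longrightarrow> bs F c s k s1 \<Longrightarrow> bs F (WhileN a b c) s1 k2 s2 \<Longrightarrow>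
     bs F (WhileN a b c) s (k + k2 + 2) s2"
| bs_whF: "\<not> nreg s a < nreg s b \<Longrightarrow> bs F (WhileN a b c) s 2 s"

lemma exec_pc: "basic i \<Longrightarrow> exec F i (s\<lparr>pc := off\<rparr>) = (exec F i s)\<lparr>pc := Suc off\<rparr>"
  by (cases i) auto

lemma step_at:
  assumes "P = pre @ (ins # rest)" "ins \<noteq> Halt"
  shows "step P F (s\<lparr>pc := length pre\<rparr>) = exec F ins (s\<lparr>pc := length pre\<rparr>)"
  using assms by (simp add: step_def halted_def nth_append)

lemma compile_correct:
  assumes "bs F c s k s'" "P = pre @ compile (length pre) c @ post"
  shows "(step P F ^^ k) (s\<lparr>pc := length pre\<rparr>) = s'\<lparr>pc := length pre + clen c\<rparr>"
  using assms
proof (induction arbitrary: pre post rule: bs.induct)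
  case (bs_skip s)
  then show ?case by simp
next
  case (bs_b i s)
  have "step P F (s\<lparr>pc := length pre\<rparr>) = exec F i (s\<lparr>pc := length pre\<rparr>)"
    by (rule step_at[of _ pre i post]) (use bs_b in \<open>auto\<close>)
  then show ?case using bs_b by (simp add: exec_pc)
next
  case (bs_seq c1 s k1 s1 c2 k2 s2)
  have 1: "(step P F ^^ k1) (s\<lparr>pc := length pre\<rparr>) = s1\<lparr>pc := length pre + clen c1\<rparr>"
    by (rule bs_seq.IH(1)[of pre "compile (length pre + clen c1) c2 @ post"]) (use bs_seq in simp)
  have 2: "(step P F ^^ k2) (s1\<lparr>pc := length (pre @ compile (length pre) c1)\<rparr>) =
     s2\<lparr>pc := length (pre @ compile (length pre) c1) + clen c2\<rparr>"
    by (rule bs_seq.IH(2)[of "pre @ compile (length pre) c1" post]) (use bs_seq in simp)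
  have "(step P F ^^ (k1 + k2)) (s\<lparr>pc := length pre\<rparr>) = (step P F ^^ k2) ((step P F ^^ k1) (s\<lparr>pc := length pre\<rparr>))"
    by (simp add: funpow_add add.commute[of k1 k2])
  then show ?case using 1 2 by simp
next
  case (bs_ifnT s a b c1 k s' c2)
  let ?o = "length pre"
  have st: "step P F (s\<lparr>pc := ?o\<rparr>) = s\<lparr>pc := ?o + 2 + clen c2\<rparr>"
    by (subst step_at[of _ pre _ "compile (Suc ?o) c2 @ Jmp (?o + 2 + clen c2 + clen c1) # compile (?o + 2 + clen c2) c1 @ post"])
       (use bs_ifnT in auto)
  have "(step P F ^^ k) (s\<lparr>pc := length (pre @ NJmpLess a b (?o + 2 + clen c2) # compile (Suc ?o) c2 @ [Jmp (?o + 2 + clen c2 + clen c1)])\<rparr>) =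
     s'\<lparr>pc := length (pre @ NJmpLess a b (?o + 2 + clen c2) # compile (Suc ?o) c2 @ [Jmp (?o + 2 + clen c2 + clen c1)]) + clen c1\<rparr>"
    by (rule bs_ifnT.IH) (use bs_ifnT in simp)
  moreover have "(step P F ^^ Suc k) (s\<lparr>pc := ?o\<rparr>) = (step P F ^^ k) (step P F (s\<lparr>pc := ?o\<rparr>))"
    by (simp only: funpow_Suc_right comp_def)
  ultimately show ?case using st by (simp add: add_ac)
next
  case (bs_ifnF s a b c2 k s' c1)
  let ?o = "length pre"
  have st: "step P F (s\<lparr>pc := ?o\<rparr>) = s\<lparr>pc := Suc ?o\<rparr>"
    by (subst step_at[of _ pre _ "compile (Suc ?o) c2 @ Jmp (?o + 2 + clen c2 + clen c1) # compile (?o + 2 + clen c2) c1 @ post"])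
       (use bs_ifnF in auto)
  have m: "(step P F ^^ k) (s\<lparr>pc := length (pre @ [NJmpLess a b (?o + 2 + clen c2)])\<rparr>) =
     s'\<lparr>pc := length (pre @ [NJmpLess a b (?o + 2 + clen c2)]) + clen c2\<rparr>"
    by (rule bs_ifnF.IH) (use bs_ifnF in simp)
  have st2: "step P F (s'\<lparr>pc := length (pre @ NJmpLess a b (?o + 2 + clen c2) # compile (Suc ?o) c2)\<rparr>) = s'\<lparr>pc := ?o + 2 + clen c2 + clen c1\<rparr>"
    by (subst step_at[of _ "pre @ NJmpLess a b (?o + 2 + clen c2) # compile (Suc ?o) c2" _ "compile (?o + 2 + clen c2) c1 @ post"])
       (use bs_ifnF in auto)
  have "(step P F ^^ (k + 2)) (s\<lparr>pc := ?o\<rparr>) = step P F ((step P F ^^ k) (step P F (s\<lparr>pc := ?o\<rparr>)))"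
    by (simp add: funpow_Suc_right del: funpow.simps) (simp add: funpow_swap1)
  then show ?case using st m st2 by (simp add: add_ac)
next
  case (bs_ifrT s a b c1 k s' c2)
  let ?o = "length pre"
  have st: "step P F (s\<lparr>pc := ?o\<rparr>) = s\<lparr>pc := ?o + 2 + clen c2\<rparr>"
    by (subst step_at[of _ pre _ "compile (Suc ?o) c2 @ Jmp (?o + 2 + clen c2 + clen c1) # compile (?o + 2 + clen c2) c1 @ post"])
       (use bs_ifrT in auto)
  have "(step P F ^^ k) (s\<lparr>pc := length (pre @ RJmpLess a b (?o + 2 + clen c2) # compile (Suc ?o) c2 @ [Jmp (?o + 2 + clen c2 + clen c1)])\<rparr>) =
     s'\<lparr>pc := length (pre @ RJmpLess a b (?o + 2 + clen c2) # compile (Suc ?o) c2 @ [Jmp (?o + 2 + clen c2 + clen c1)]) + clen c1\<rparr>"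
    by (rule bs_ifrT.IH) (use bs_ifrT in simp)
  moreover have "(step P F ^^ Suc k) (s\<lparr>pc := ?o\<rparr>) = (step P F ^^ k) (step P F (s\<lparr>pc := ?o\<rparr>))"
    by (simp only: funpow_Suc_right comp_def)
  ultimately show ?case using st by (simp add: add_ac)
next
  case (bs_ifrF s a b c2 k s' c1)
  let ?o = "length pre"
  have st: "step P F (s\<lparr>pc := ?o\<rparr>) = s\<lparr>pc := Suc ?o\<rparr>"
    by (subst step_at[of _ pre _ "compile (Suc ?o) c2 @ Jmp (?o + 2 + clen c2 + clen c1) # compile (?o + 2 + clen c2) c1 @ post"])
       (use bs_ifrF in auto)
  have m: "(step P F ^^ k) (s\<lparr>pc := length (pre @ [RJmpLess a b (?o + 2 + clen c2)])\<rparr>) =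
     s'\<lparr>pc := length (pre @ [RJmpLess a b (?o + 2 + clen c2)]) + clen c2\<rparr>"
    by (rule bs_ifrF.IH) (use bs_ifrF in simp)
  have st2: "step P F (s'\<lparr>pc := length (pre @ RJmpLess a b (?o + 2 + clen c2) # compile (Suc ?o) c2)\<rparr>) = s'\<lparr>pc := ?o + 2 + clen c2 + clen c1\<rparr>"
    by (subst step_at[of _ "pre @ RJmpLess a b (?o + 2 + clen c2) # compile (Suc ?o) c2" _ "compile (?o + 2 + clen c2) c1 @ post"])
       (use bs_ifrF in auto)
  have "(step P F ^^ (k + 2)) (s\<lparr>pc := ?o\<rparr>) = step P F ((step P F ^^ k) (step P F (s\<lparr>pc := ?o\<rparr>)))"
    by (simp add: funpow_Suc_right del: funpow.simps) (simp add: funpow_swap1)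
  then show ?case using st m st2 by (simp add: add_ac)
next
  case (bs_whT s a b c k s1 k2 s2)
  let ?o = "length pre"
  have st: "step P F (s\<lparr>pc := ?o\<rparr>) = s\<lparr>pc := ?o + 2\<rparr>"
    by (subst step_at[of _ pre _ "Jmp (?o + 3 + clen c) # compile (?o + 2) c @ [Jmp ?o] @ post"])
       (use bs_whT in auto)
  have m: "(step P F ^^ k) (s\<lparr>pc := length (pre @ [NJmpLess a b (?o + 2), Jmp (?o + 3 + clen c)])\<rparr>) =
     s1\<lparr>pc := length (pre @ [NJmpLess a b (?o + 2), Jmp (?o + 3 + clen c)]) + clen c\<rparr>"
    by (rule bs_whT.IH(1)) (use bs_whT in simp)
  have st2: "step P F (s1\<lparr>pc := length (pre @ NJmpLess a b (?o + 2) # Jmp (?o + 3 + clen c) # compile (?o + 2) c)\<rparr>) = s1\<lparr>pc := ?o\<rparr>"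
    by (subst step_at[of _ "pre @ NJmpLess a b (?o + 2) # Jmp (?o + 3 + clen c) # compile (?o + 2) c" _ "post"])
       (use bs_whT in auto)
  have r: "(step P F ^^ k2) (s1\<lparr>pc := ?o\<rparr>) = s2\<lparr>pc := ?o + clen (WhileN a b c)\<rparr>"
    by (rule bs_whT.IH(2)) (use bs_whT in simp)
  have "(step P F ^^ (k + k2 + 2)) (s\<lparr>pc := ?o\<rparr>) = (step P F ^^ k2) ((step P F ^^ Suc (Suc k)) (s\<lparr>pc := ?o\<rparr>))"
  proof -
    have "k + k2 + 2 = k2 + Suc (Suc k)" by simp
    then show ?thesis by (simp only: funpow_add comp_def)
  qed
  also have "(step P F ^^ Suc (Suc k)) (s\<lparr>pc := ?o\<rparr>) = step P F ((step P F ^^ k) (step P F (s\<lparr>pc := ?o\<rparr>)))"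
    by (metis comp_apply funpow.simps(2) funpow_Suc_right)
  finally show ?case using st m st2 r by (simp add: add_ac)
next
  case (bs_whF s a b c)
  let ?o = "length pre"
  have st: "step P F (s\<lparr>pc := ?o\<rparr>) = s\<lparr>pc := Suc ?o\<rparr>"
    by (subst step_at[of _ pre _ "Jmp (?o + 3 + clen c) # compile (?o + 2) c @ [Jmp ?o] @ post"])
       (use bs_whF in auto)
  have st2: "step P F (s\<lparr>pc := length (pre @ [NJmpLess a b (?o + 2)])\<rparr>) = s\<lparr>pc := ?o + 3 + clen c\<rparr>"
    by (subst step_at[of _ "pre @ [NJmpLess a b (?o + 2)]" _ "compile (?o + 2) c @ [Jmp ?o] @ post"])
       (use bs_whF in auto)
  show ?case using st st2 by (simp add: numeral_2_eq_2)
qed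

lemma halted_fix: "halted P s \<Longrightarrow> (step P F ^^ k) s = s"
  by (induction k) (auto simp: step_def)

lemma compile_top:
  assumes "bs F c s k s'" "pc s = 0" "k \<le> N"
  shows "(step (compile 0 c @ [Halt]) F ^^ N) s = s'\<lparr>pc := clen c\<rparr> \<and> halted (compile 0 c @ [Halt]) (s'\<lparr>pc := clen c\<rparr>)"
proof -
  let ?P = "compile 0 c @ [Halt]"
  have e: "s\<lparr>pc := 0\<rparr> = s" using assms(2) by simp
  have 1: "(step ?P F ^^ k) s = s'\<lparr>pc := clen c\<rparr>"
    using compile_correct[OF assms(1), of ?P "[]" "[Halt]"] e by simp
  have h: "halted ?P (s'\<lparr>pc := clen c\<rparr>)" by (simp add: halted_def nth_append)
  have "(step ?P F ^^ N) s = (step ?P F ^^ (N - k)) ((step ?P F ^^ k) s)"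
    using assms(3) by (metis funpow_add comp_apply le_add_diff_inverse2)
  then show ?thesis using 1 h halted_fix by simp
qed

fun lf :: "com \<Rightarrow> bool" where
  "lf SKIP = True"
| "lf (B i) = basic i"
| "lf (c1 ;; c2) = (lf c1 \<and> lf c2)"
| "lf (IfN a b c1 c2) = (lf c1 \<and> lf c2)"
| "lf (IfR a b c1 c2) = (lf c1 \<and> lf c2)"
| "lf (WhileN a b c) = False"

fun run :: "(nat \<Rightarrow> real \<Rightarrow> real) \<Rightarrow> com \<Rightarrow> mstate \<Rightarrow> mstate" where
  "run F SKIP s = s"
| "run F (B i) s = (exec F i s)\<lparr>pc := pc s\<rparr>"
| "run F (c1 ;; c2) s = run F c2 (run F c1 s)"
| "run F (IfN a b c1 c2) s = (if nreg s a < nreg s b then run F c1 s else run F c2 s)"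
| "run F (IfR a b c1 c2) s = (if rreg s a < rreg s b then run F c1 s else run F c2 s)"
| "run F (WhileN a b c) s = s"

fun cost :: "(nat \<Rightarrow> real \<Rightarrow> real) \<Rightarrow> com \<Rightarrow> mstate \<Rightarrow> nat" where
  "cost F SKIP s = 0"
| "cost F (B i) s = 1"
| "cost F (c1 ;; c2) s = cost F c1 s + cost F c2 (run F c1 s)"
| "cost F (IfN a b c1 c2) s = (if nreg s a < nreg s b then Suc (cost F c1 s) else cost F c2 s + 2)"
| "cost F (IfR a b c1 c2) s = (if rreg s a < rreg s b then Suc (cost F c1 s) else cost F c2 s + 2)"
| "cost F (WhileN a b c) s = 0"

lemma bs_ifnF': "\<not> nreg s a < nreg s b \<Longrightarrow> bs F c2 s k s' \<Longrightarrow> bs F (IfN a b c1 c2) s (Suc (Suc k)) s'"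
  using bs_ifnF by fastforce
lemma bs_ifrF': "\<not> rreg s a < rreg s b \<Longrightarrow> bs F c2 s k s' \<Longrightarrow> bs F (IfR a b c1 c2) s (Suc (Suc k)) s'"
  using bs_ifrF by fastforce

lemma lf_bs: "lf c \<Longrightarrow> bs F c s (cost F c s) (run F c s)"
  by (induction c arbitrary: s) (auto intro: bs.intros bs_ifnF' bs_ifrF' bs_b[simplified])

lemma lf_cost: "lf c \<Longrightarrow> cost F c s \<le> clen c"
proof (induction c arbitrary: s)
  case (CSeq c1 c2)
  then show ?case by (simp add: add_mono)
next
  case (IfN a b c1 c2)
  then show ?case using le_SucI trans_le_add1 trans_le_add2 by (simp, meson)
next
  case (IfR a b c1 c2)
  then show ?case using le_SucI trans_le_add1 trans_le_add2 by (simp, meson)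
qed auto

definition ex_run :: "(nat \<Rightarrow> real \<Rightarrow> real) \<Rightarrow> com \<Rightarrow> mstate \<Rightarrow> nat \<Rightarrow> (mstate \<Rightarrow> bool) \<Rightarrow> bool" where
  "ex_run F c s K R \<longleftrightarrow> (\<exists>k s'. bs F c s k s' \<and> k \<le> K \<and> R s')"

lemma ex_run_lf: "lf c \<Longrightarrow> R (run F c s) \<Longrightarrow> ex_run F c s (clen c) R"
  unfolding ex_run_def using lf_bs lf_cost by blast

lemma ex_run_seq:
  assumes "ex_run F c1 s K1 R1" "\<And>s1. R1 s1 \<Longrightarrow> ex_run F c2 s1 K2 R2"
  shows "ex_run F (c1 ;; c2) s (K1 + K2) R2"
proof -
  obtain k1 s1 where 1: "bs F c1 s k1 s1" "k1 \<le> K1" "R1 s1" using assms(1) unfolding ex_run_def by blast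
  obtain k2 s2 where 2: "bs F c2 s1 k2 s2" "k2 \<le> K2" "R2 s2" using assms(2)[OF 1(3)] unfolding ex_run_def by blast
  show ?thesis unfolding ex_run_def using 1 2 by (intro exI[of _ "k1 + k2"] exI[of _ s2]) (auto intro: bs_seq)
qed

lemma ex_run_seq_lf:
  assumes "lf c1" "ex_run F c2 (run F c1 s) K R"
  shows "ex_run F (c1 ;; c2) s (clen c1 + K) R"
  by (rule ex_run_seq[OF ex_run_lf[OF assms(1), where R = "\<lambda>s'. s' = run F c1 s"]]) (use assms in auto)

lemma ex_run_seq_lf2:
  assumes "ex_run F c1 s K R1" "lf c2" "\<And>s1. R1 s1 \<Longrightarrow> R (run F c2 s1)"
  shows "ex_run F (c1 ;; c2) s (K + clen c2) R"
proof (rule ex_run_seq[OF assms(1)])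
  fix s1 assume "R1 s1" then show "ex_run F c2 s1 (clen c2) R" using assms(2,3) by (intro ex_run_lf) auto
qed

lemma ex_run_mono:
  assumes "ex_run F c s K R" "K \<le> K'" "\<And>s'. R s' \<Longrightarrow> R' s'"
  shows "ex_run F c s K' R'"
  using assms unfolding ex_run_def by fastforce

lemma ex_run_ifn:
  assumes "nreg s a < nreg s b \<Longrightarrow> ex_run F c1 s K R" "\<not> nreg s a < nreg s b \<Longrightarrow> ex_run F c2 s K R"
  shows "ex_run F (IfN a b c1 c2) s (K + 2) R"
proof (cases "nreg s a < nreg s b")
  case True
  then show ?thesis using assms(1) unfolding ex_run_def by (fastforce intro: bs_ifnT)
next
  case False
  then show ?thesis using assms(2) unfolding ex_run_def by (fastforce intro: bs_ifnF)
qed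

lemma ex_run_while:
  fixes \<mu> :: "mstate \<Rightarrow> nat"
  assumes "I s"
    and body: "\<And>s. I s \<Longrightarrow> nreg s a < nreg s b \<Longrightarrow> ex_run F c s K (\<lambda>s'. I s' \<and> \<mu> s' < \<mu> s)"
  shows "ex_run F (WhileN a b c) s (\<mu> s * (K + 2) + 2) (\<lambda>s'. I s' \<and> \<not> nreg s' a < nreg s' b)"
  using assms(1)
proof (induction "\<mu> s" arbitrary: s rule: less_induct)
  case less
  show ?case
  proof (cases "nreg s a < nreg s b")
    case False
    then show ?thesis using less.prems unfolding ex_run_def by (intro exI[of _ 2] exI[of _ s]) (auto intro: bs_whF)
  next
    case True
    obtain k s1 where 1: "bs F c s k s1" "k \<le> K" "I s1" "\<mu> s1 < \<mu> s"
      using body[OF less.prems True] unfolding ex_run_def by blast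
    obtain k2 s2 where 2: "bs F (WhileN a b c) s1 k2 s2" "k2 \<le> \<mu> s1 * (K + 2) + 2" "I s2 \<and> \<not> nreg s2 a < nreg s2 b"
      using less.hyps[OF 1(4) 1(3)] unfolding ex_run_def by blast
    have "k + k2 + 2 \<le> \<mu> s * (K + 2) + 2"
    proof -
      have "Suc (\<mu> s1) \<le> \<mu> s" using 1(4) by simp
      then have "(Suc (\<mu> s1)) * (K + 2) \<le> \<mu> s * (K + 2)" by (rule mult_right_mono) simp
      then show ?thesis using 1(2) 2(2) by simp
    qed
    moreover have "bs F (WhileN a b c) s (k + k2 + 2) s2" using 1 2 True by (intro bs_whT) auto
    ultimately show ?thesis unfolding ex_run_def using 2 by blast
  qed
qed

type_synonym cons = "nat \<times> real \<times> bool"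
type_synonym ninfo = "dtree \<times> nat option \<times> bool \<times> cons list"

fun tinf :: "nat \<Rightarrow> nat option \<Rightarrow> bool \<Rightarrow> cons list \<Rightarrow> dtree \<Rightarrow> ninfo list" where
  "tinf off p dr pa (Leaf y) = [(Leaf y, p, dr, pa)]"
| "tinf off p dr pa (Node q t a b) = (Node q t a b, p, dr, pa) #
     tinf (off + 1) (Some off) True (pa @ [(q, t, True)]) a @
     tinf (off + 1 + tsize a) (Some off) False (pa @ [(q, t, False)]) b"

fun einf :: "nat \<Rightarrow> dtree list \<Rightarrow> ninfo list" where
  "einf off [] = []"
| "einf off (T # ts) = tinf off None False [] T @ einf (off + tsize T) ts"

fun nodeinfo :: "nat \<Rightarrow> dtree \<Rightarrow> nat \<times> nat \<times> nat \<times> nat \<times> real" where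
  "nodeinfo c (Leaf y) = (0, 0, 0, 0, y)"
| "nodeinfo c (Node q t a b) = (1, q, c + 1, c + 1 + tsize a, t)"

definition ind :: "cons list \<Rightarrow> (nat \<Rightarrow> real) \<Rightarrow> bool" where
  "ind cs v \<longleftrightarrow> (\<forall>(q, t, b) \<in> set cs. (v q < t) = b)"

fun wt :: "dtree \<Rightarrow> real" where
  "wt (Leaf y) = y"
| "wt (Node q t a b) = 0"

lemma tsize_pos: "0 < tsize T" by (cases T) auto

lemma length_tinf[simp]: "length (tinf off p dr pa T) = tsize T"
  by (induction T arbitrary: off p dr pa) auto

lemma length_tnodes[simp]: "length (tnodes off T) = tsize T"
  by (induction T arbitrary: off) auto

lemma tinf_0: "tinf off p dr pa T ! 0 = (T, p, dr, pa)"
  by (cases T) auto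

lemma tnodes_nth:
  "i < tsize T \<Longrightarrow> tnodes off T ! i = nodeinfo (off + i) (fst (tinf off p dr pa T ! i))"
proof (induction T arbitrary: off p dr pa i)
  case (Leaf y)
  then show ?case by simp
next
  case (Node q t a b)
  show ?case
  proof (cases i)
    case 0
    then show ?thesis by simp
  next
    case (Suc j)
    show ?thesis
    proof (cases "j < tsize a")
      case True
      then show ?thesis using Node.IH(1)[of j "off + 1"] Suc by (simp add: nth_append)
    next
      case False
      then have "j - tsize a < tsize b" using Node.prems Suc by simp
      then show ?thesis using Node.IH(2)[of "j - tsize a" "off + 1 + tsize a"] Suc False by (simp add: nth_append)
    qed
  qed
qed

abbreviation "ipath (e::ninfo) \<equiv> snd (snd (snd e))"
abbreviation "ipar (e::ninfo) \<equiv> fst (snd e)"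
abbreviation "idir (e::ninfo) \<equiv> fst (snd (snd e))"

lemma tinf_children:
  "i < tsize T \<Longrightarrow> fst (tinf off p dr pa T ! i) = Node q t a b \<Longrightarrow>
   i + tsize (Node q t a b) \<le> tsize T \<and>
   tinf off p dr pa T ! (i + 1) = (a, Some (off + i), True, ipath (tinf off p dr pa T ! i) @ [(q, t, True)]) \<and>
   tinf off p dr pa T ! (i + 1 + tsize a) = (b, Some (off + i), False, ipath (tinf off p dr pa T ! i) @ [(q, t, False)])"
proof (induction T arbitrary: off p dr pa i)
  case (Leaf y)
  then show ?case by simp
next
  case (Node q0 t0 a0 b0)
  show ?case
  proof (cases i)
    case 0
    then show ?thesis using Node.prems by (simp add: nth_append tinf_0 tsize_pos)
  next
    case (Suc j)
    show ?thesis
    proof (cases "j < tsize a0")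
      case True
      have fj: "fst (tinf (off + 1) (Some off) True (pa @ [(q0, t0, True)]) a0 ! j) = Node q t a b"
        using Node.prems Suc True by (simp add: nth_append)
      from Node.IH(1)[OF True fj] show ?thesis using Suc True tsize_pos[of b] by (simp add: nth_append)
    next
      case False
      then obtain k where k: "j = tsize a0 + k" using le_Suc_ex not_less by blast
      then have jb: "k < tsize b0" using Node.prems Suc by simp
      have fj: "fst (tinf (off + 1 + tsize a0) (Some off) False (pa @ [(q0, t0, False)]) b0 ! k) = Node q t a b"
        using Node.prems Suc k by (simp add: nth_append)
      from Node.IH(2)[OF jb fj] show ?thesis using Suc k
        by (simp add: nth_append add.commute add.left_commute)
    qed
  qed
qed

lemma tinf_parent:
  "i < tsize T \<Longrightarrow> 0 < i \<Longrightarrow> \<exists>j<i. ipar (tinf off p dr pa T ! i) = Some (off + j) \<and>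
     (\<exists>q t a b. fst (tinf off p dr pa T ! j) = Node q t a b \<and>
        (if idir (tinf off p dr pa T ! i) then i = j + 1 else i = j + 1 + tsize a) \<and>
        ipath (tinf off p dr pa T ! i) = ipath (tinf off p dr pa T ! j) @ [(q, t, idir (tinf off p dr pa T ! i))])"
proof (induction T arbitrary: off p dr pa i)
  case (Leaf y)
  then show ?case by simp
next
  case (Node q0 t0 a0 b0)
  obtain j where Suc: "i = Suc j" using Node.prems by (cases i) auto
  let ?L = "tinf (off + 1) (Some off) True (pa @ [(q0, t0, True)]) a0"
  let ?R = "tinf (off + 1 + tsize a0) (Some off) False (pa @ [(q0, t0, False)]) b0"
  show ?case
  proof (cases "j < tsize a0")
    case True
    show ?thesis
    proof (cases "j = 0")
      case True
      then show ?thesis using Suc by (intro exI[of _ 0]) (simp add: tinf_0 nth_append tsize_pos)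
    next
      case False
      obtain j' where j': "j' < j" "ipar (?L ! j) = Some (off + 1 + j')"
        "\<exists>q t a b. fst (?L ! j') = Node q t a b \<and> (if idir (?L ! j) then j = j' + 1 else j = j' + 1 + tsize a) \<and>
          ipath (?L ! j) = ipath (?L ! j') @ [(q, t, idir (?L ! j))]"
        using Node.IH(1)[of j "off + 1" "Some off" True "pa @ [(q0, t0, True)]"] True False by auto
      have "j' < tsize a0" using j' True by simp
      then have e1: "tinf off p dr pa (Node q0 t0 a0 b0) ! Suc j' = ?L ! j'" by (simp add: nth_append)
      have e2: "tinf off p dr pa (Node q0 t0 a0 b0) ! i = ?L ! j" using Suc True by (simp add: nth_append)
      obtain q t a b where qt: "fst (?L ! j') = Node q t a b" "(if idir (?L ! j) then j = j' + 1 else j = j' + 1 + tsize a)"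
          "ipath (?L ! j) = ipath (?L ! j') @ [(q, t, idir (?L ! j))]" using j'(3) by blast
      have f1: "Suc j' < i" using Suc j' by simp
      have f2: "ipar (?L ! j) = Some (off + Suc j')" using j'(2) by simp
      have f3: "(if idir (?L ! j) then i = Suc j' + 1 else i = Suc j' + 1 + tsize a)"
        using qt(2) Suc by (simp split: if_splits)
      show ?thesis apply (rule exI[of _ "Suc j'"]) unfolding e1 e2 using qt f1 f2 f3 by blast
    qed
  next
    case False
    show ?thesis
    proof (cases "j = tsize a0")
      case True
      then show ?thesis using Suc by (intro exI[of _ 0]) (simp add: tinf_0 nth_append tsize_pos)
    next
      case False2: False
      obtain k where k: "j = tsize a0 + k" using False le_Suc_ex not_less by blast
      have jb: "k < tsize b0" using Node.prems Suc k by simp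
      have jp: "0 < k" using k False2 by simp
      obtain j' where j': "j' < k" "ipar (?R ! k) = Some (off + 1 + tsize a0 + j')"
        "\<exists>q t a b. fst (?R ! j') = Node q t a b \<and> (if idir (?R ! k) then k = j' + 1 else k = j' + 1 + tsize a) \<and>
          ipath (?R ! k) = ipath (?R ! j') @ [(q, t, idir (?R ! k))]"
        using Node.IH(2)[OF jb jp] by blast
      have "j' < tsize b0" using j' jb by simp
      then have e1: "tinf off p dr pa (Node q0 t0 a0 b0) ! Suc (tsize a0 + j') = ?R ! j'" by (simp add: nth_append)
      have e2: "tinf off p dr pa (Node q0 t0 a0 b0) ! i = ?R ! k" using Suc k by (simp add: nth_append)
      obtain q t a b where qt: "fst (?R ! j') = Node q t a b" "(if idir (?R ! k) then k = j' + 1 else k = j' + 1 + tsize a)"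
          "ipath (?R ! k) = ipath (?R ! j') @ [(q, t, idir (?R ! k))]" using j'(3) by blast
      have f1: "Suc (tsize a0 + j') < i" using Suc k j' by simp
      have f2: "ipar (?R ! k) = Some (off + Suc (tsize a0 + j'))" using j'(2) by simp
      have f3: "(if idir (?R ! k) then i = Suc (tsize a0 + j') + 1 else i = Suc (tsize a0 + j') + 1 + tsize a)"
        using qt(2) Suc k by (simp split: if_splits)
      show ?thesis apply (rule exI[of _ "Suc (tsize a0 + j')"]) unfolding e1 e2 using qt f1 f2 f3 by blast
    qed
  qed
qed

lemma tinf_eval:
  "sum_list (map (\<lambda>e. wt (fst e) * (if ind (ipath e) v then 1 else 0)) (tinf off p dr pa T)) =
   (if ind pa v then 1 else 0) * eval_tree T v"
proof (induction T arbitrary: off p dr pa)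
  case (Leaf y)
  then show ?case by simp
next
  case (Node q t a b)
  have i1: "ind (pa @ [(q, t, True)]) v = (ind pa v \<and> v q < t)" by (auto simp: ind_def)
  have i2: "ind (pa @ [(q, t, False)]) v = (ind pa v \<and> \<not> v q < t)" by (auto simp: ind_def)
  show ?case using Node.IH by (simp add: i1 i2)
qed

lemma tinf_feats:
  "e \<in> set (tinf off p dr pa T) \<Longrightarrow> set (map fst (ipath e)) \<subseteq> set (map fst pa) \<union> feats T \<and>
     (\<forall>q t a b. fst e = Node q t a b \<longrightarrow> q \<in> feats T)"
proof (induction T arbitrary: off p dr pa)
  case (Leaf y)
  then show ?case by auto
next
  case (Node q t a b)
  from Node.prems show ?case
    using Node.IH(1)[of "off + 1" "Some off" True "pa @ [(q, t, True)]"]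
      Node.IH(2)[of "off + 1 + tsize a" "Some off" False "pa @ [(q, t, False)]"]
    by auto
qed

lemma length_einf[simp]: "length (einf off ts) = ens_size ts"
  by (induction ts arbitrary: off) (auto simp: ens_size_def)

lemma length_enodes[simp]: "length (enodes off ts) = ens_size ts"
  by (induction ts arbitrary: off) (auto simp: ens_size_def)

lemma ens_size_Cons: "ens_size (T # ts) = tsize T + ens_size ts"
  by (simp add: ens_size_def)

lemma enodes_nth:
  "c < ens_size ts \<Longrightarrow> enodes off ts ! c = nodeinfo (off + c) (fst (einf off ts ! c))"
proof (induction ts arbitrary: off c)
  case Nil
  then show ?case by (simp add: ens_size_def)
next
  case (Cons T ts)
  show ?case
  proof (cases "c < tsize T")
    case True
    then show ?thesis using tnodes_nth[OF True, of off None False "[]"] by (simp add: nth_append)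
  next
    case False
    then obtain k where k: "c = tsize T + k" using le_Suc_ex not_less by blast
    then have "k < ens_size ts" using Cons.prems by (simp add: ens_size_Cons)
    then show ?thesis using Cons.IH[of k "off + tsize T"] k by (simp add: nth_append add.assoc)
  qed
qed

lemma einf_children:
  "c < ens_size ts \<Longrightarrow> fst (einf off ts ! c) = Node q t a b \<Longrightarrow>
   c + tsize (Node q t a b) \<le> ens_size ts \<and>
   einf off ts ! (c + 1) = (a, Some (off + c), True, ipath (einf off ts ! c) @ [(q, t, True)]) \<and>
   einf off ts ! (c + 1 + tsize a) = (b, Some (off + c), False, ipath (einf off ts ! c) @ [(q, t, False)])"
proof (induction ts arbitrary: off c)
  case Nil
  then show ?case by (simp add: ens_size_def)
next
  case (Cons T ts)
  show ?case
  proof (cases "c < tsize T")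
    case True
    have f: "fst (tinf off None False [] T ! c) = Node q t a b" using Cons.prems True by (simp add: nth_append)
    from tinf_children[OF True f] show ?thesis using True tsize_pos[of b] by (simp add: nth_append ens_size_Cons)
  next
    case False
    then obtain k where k: "c = tsize T + k" using le_Suc_ex not_less by blast
    then have kk: "k < ens_size ts" using Cons.prems by (simp add: ens_size_Cons)
    have f: "fst (einf (off + tsize T) ts ! k) = Node q t a b" using Cons.prems k by (simp add: nth_append)
    from Cons.IH[OF kk f] show ?thesis using k by (simp add: nth_append ens_size_Cons add.assoc)
  qed
qed

lemma einf_parent:
  "c < ens_size ts \<Longrightarrow> (ipar (einf off ts ! c) = None \<and> ipath (einf off ts ! c) = []) \<or>
   (\<exists>j<c. ipar (einf off ts ! c) = Some (off + j) \<and>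
     (\<exists>q t a b. fst (einf off ts ! j) = Node q t a b \<and>
        (if idir (einf off ts ! c) then c = j + 1 else c = j + 1 + tsize a) \<and>
        ipath (einf off ts ! c) = ipath (einf off ts ! j) @ [(q, t, idir (einf off ts ! c))]))"
proof (induction ts arbitrary: off c)
  case Nil
  then show ?case by (simp add: ens_size_def)
next
  case (Cons T ts)
  show ?case
  proof (cases "c < tsize T")
    case True
    show ?thesis
    proof (cases "c = 0")
      case True
      then show ?thesis by (simp add: tinf_0 nth_append tsize_pos)
    next
      case False
      obtain j where j: "j < c" "ipar (tinf off None False [] T ! c) = Some (off + j)"
        "\<exists>q t a b. fst (tinf off None False [] T ! j) = Node q t a b \<and>
          (if idir (tinf off None False [] T ! c) then c = j + 1 else c = j + 1 + tsize a) \<and>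
          ipath (tinf off None False [] T ! c) = ipath (tinf off None False [] T ! j) @ [(q, t, idir (tinf off None False [] T ! c))]"
        using tinf_parent[OF True, of off None False "[]"] False by blast
      have e1: "einf off (T # ts) ! c = tinf off None False [] T ! c" using True by (simp add: nth_append)
      have e2: "einf off (T # ts) ! j = tinf off None False [] T ! j" using True j by (simp add: nth_append)
      show ?thesis apply (rule disjI2) apply (rule exI[of _ j]) unfolding e1 e2 using j by blast
    qed
  next
    case False
    then obtain k where k: "c = tsize T + k" using le_Suc_ex not_less by blast
    then have kk: "k < ens_size ts" using Cons.prems by (simp add: ens_size_Cons)
    have e1: "einf off (T # ts) ! c = einf (off + tsize T) ts ! k" using k by (simp add: nth_append)
    have e2: "\<And>j. einf off (T # ts) ! (tsize T + j) = einf (off + tsize T) ts ! j" by (simp add: nth_append)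
    from Cons.IH[OF kk, of "off + tsize T"] show ?thesis
    proof
      assume "ipar (einf (off + tsize T) ts ! k) = None \<and> ipath (einf (off + tsize T) ts ! k) = []"
      then show ?thesis unfolding e1 by blast
    next
      assume "\<exists>j<k. ipar (einf (off + tsize T) ts ! k) = Some (off + tsize T + j) \<and>
     (\<exists>q t a b. fst (einf (off + tsize T) ts ! j) = Node q t a b \<and>
        (if idir (einf (off + tsize T) ts ! k) then k = j + 1 else k = j + 1 + tsize a) \<and>
        ipath (einf (off + tsize T) ts ! k) = ipath (einf (off + tsize T) ts ! j) @ [(q, t, idir (einf (off + tsize T) ts ! k))])"
      then obtain j q t a b where j: "j < k" "ipar (einf (off + tsize T) ts ! k) = Some (off + tsize T + j)"
        "fst (einf (off + tsize T) ts ! j) = Node q t a b"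
        "(if idir (einf (off + tsize T) ts ! k) then k = j + 1 else k = j + 1 + tsize a)"
        "ipath (einf (off + tsize T) ts ! k) = ipath (einf (off + tsize T) ts ! j) @ [(q, t, idir (einf (off + tsize T) ts ! k))]"
        by blast
      have f3: "(if idir (einf (off + tsize T) ts ! k) then c = (tsize T + j) + 1 else c = (tsize T + j) + 1 + tsize a)"
        using j(4) k by (simp split: if_splits)
      show ?thesis apply (rule disjI2) apply (rule exI[of _ "tsize T + j"]) unfolding e1 e2 using j k f3
        by (simp add: add.assoc)
    qed
  qed
qed

lemma ind_Nil[simp]: "ind [] v" by (simp add: ind_def)

lemma einf_eval:
  "sum_list (map (\<lambda>e. wt (fst e) * (if ind (ipath e) v then 1 else 0)) (einf off ts)) = ens_eval ts v"
  by (induction ts arbitrary: off) (simp_all add: ens_eval_def tinf_eval[where pa = "[]", simplified])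

lemma einf_feats:
  "wf_ensemble d ts \<Longrightarrow> e \<in> set (einf off ts) \<Longrightarrow> set (map fst (ipath e)) \<subseteq> {1..d} \<and>
     (\<forall>q t a b. fst e = Node q t a b \<longrightarrow> q \<in> {1..d})"
proof (induction ts arbitrary: off)
  case Nil
  then show ?case by simp
next
  case (Cons T ts)
  have w: "feats T \<subseteq> {1..d}" "wf_ensemble d ts" using Cons.prems(1) by (auto simp: wf_ensemble_def)
  from Cons.prems(2) show ?case
  proof (cases "e \<in> set (tinf off None False [] T)")
    case True
    then show ?thesis using tinf_feats[OF True] w by auto
  next
    case False
    then show ?thesis using Cons.IH[OF w(2)] Cons.prems(2) by auto
  qed
qed

definition cq :: "nat \<Rightarrow> cons list \<Rightarrow> real \<Rightarrow> bool" where
  "cq q cs v \<longleftrightarrow> list_all (\<lambda>(q', t, b). q' = q \<longrightarrow> (v < t) = b) cs"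

definition chi :: "bool \<Rightarrow> real" where "chi P = (if P then 1 else 0)"

lemma chi_all: "finite Q \<Longrightarrow> chi (\<forall>q\<in>Q. P q) = (\<Prod>q\<in>Q. chi (P q))"
  by (induction Q rule: finite_induct) (auto simp: chi_def)

lemma ind_cq: "set (map fst cs) \<subseteq> Q \<Longrightarrow> ind cs v \<longleftrightarrow> (\<forall>q\<in>Q. cq q cs (v q))"
  unfolding ind_def cq_def list_all_iff by fastforce

lemma pred_cq: "Measurable.pred borel (\<lambda>v. cq q cs (a + v))"
proof (induction cs)
  case Nil
  then show ?case by (simp add: cq_def)
next
  case (Cons c cs)
  obtain q' t b where c: "c = (q', t, b)" by (cases c) auto
  have e: "(\<lambda>v. cq q (c # cs) (a + v)) = (\<lambda>v. (q' = q \<longrightarrow> (a + v < t) = b) \<and> cq q cs (a + v))"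
    by (simp add: cq_def c)
  show ?case unfolding e using Cons by measurable
qed

lemma sets_cq: "{v. cq q cs (a + v)} \<in> sets borel"
  using predE[OF pred_cq] by simp

definition isem :: "nat \<Rightarrow> real \<Rightarrow> nat \<Rightarrow> real \<Rightarrow> real \<Rightarrow> bool" where
  "isem hl lo hh hi v \<longleftrightarrow> (0 < hl \<longrightarrow> lo \<le> v) \<and> (0 < hh \<longrightarrow> v < hi)"

locale pg =
  fixes d :: nat and ts :: "dtree list" and x :: "nat \<Rightarrow> real" and S :: "nat set" and D :: "nat \<Rightarrow> real measure"
  assumes wf: "wf_ensemble d ts" and SS: "S \<subseteq> {1..d}"
    and Dp: "\<And>i. i \<in> S \<Longrightarrow> prob_space (D i)" and Ds: "\<And>i. i \<in> S \<Longrightarrow> sets (D i) = sets borel"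
begin

definition prq :: "nat \<Rightarrow> cons list \<Rightarrow> real" where
  "prq q cs = (if q \<in> S then measure (D q) {v. cq q cs (x q + v)} else chi (cq q cs (x q)))"

definition Pr :: "cons list \<Rightarrow> real" where
  "Pr cs = (\<integral>\<delta>. chi (ind cs (perturb_pt x S \<delta>)) \<partial>PiM S D)"

definition D' where "D' i = (if i \<in> S then D i else return borel 0)"

lemma finS: "finite S" using SS finite_subset by blast

lemma D'_prob: "prob_space (D' i)" by (auto simp: D'_def Dp prob_space_return)

lemma PiM_D': "PiM S D = PiM S D'" by (rule PiM_cong) (auto simp: D'_def)

lemma space_D: "i \<in> S \<Longrightarrow> space (D i) = UNIV"
  using sets_eq_imp_space_eq[OF Ds] by simp

lemma prob_PiM: "prob_space (PiM S D)"
  by (rule prob_space_PiM) (rule Dp)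

lemma Pr_prod:
  assumes "set (map fst cs) \<subseteq> {1..d}"
  shows "Pr cs = (\<Prod>q\<in>{1..d}. prq q cs)"
proof -
  let ?h = "\<lambda>q v. chi (cq q cs (x q + v))"
  let ?C = "\<Prod>q\<in>{1..d} - S. chi (cq q cs (x q))"
  have pt: "chi (ind cs (perturb_pt x S \<delta>)) = (\<Prod>q\<in>S. ?h q (\<delta> q)) * ?C" for \<delta>
  proof -
    have "chi (ind cs (perturb_pt x S \<delta>)) = (\<Prod>q\<in>{1..d}. chi (cq q cs (perturb_pt x S \<delta> q)))"
      using ind_cq[OF assms] chi_all[of "{1..d}"] by simp
    also have "\<dots> = (\<Prod>q\<in>{1..d} - S. chi (cq q cs (perturb_pt x S \<delta> q))) * (\<Prod>q\<in>S. chi (cq q cs (perturb_pt x S \<delta> q)))"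
      using prod.subset_diff[OF SS] by simp
    also have "(\<Prod>q\<in>{1..d} - S. chi (cq q cs (perturb_pt x S \<delta> q))) = ?C"
      by (rule prod.cong) (auto simp: perturb_pt_def)
    also have "(\<Prod>q\<in>S. chi (cq q cs (perturb_pt x S \<delta> q))) = (\<Prod>q\<in>S. ?h q (\<delta> q))"
      by (rule prod.cong) (auto simp: perturb_pt_def)
    finally show ?thesis by simp
  qed
  interpret product_sigma_finite D'
    unfolding product_sigma_finite_def using prob_space_imp_sigma_finite[OF D'_prob] by blast
  have hi: "integrable (D' q) (?h q)" if "q \<in> S" for q
  proof -
    interpret prob_space "D' q" by (rule D'_prob)
    have "?h q = indicator {v. cq q cs (x q + v)}" by (auto simp: chi_def indicator_def)
    moreover have "{v. cq q cs (x q + v)} \<in> sets (D' q)" using that sets_cq Ds by (simp add: D'_def)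
    ultimately show ?thesis by (simp add: integrable_indicator_iff emeasure_eq_measure)
  qed
  have hv: "integral\<^sup>L (D' q) (?h q) = measure (D q) {v. cq q cs (x q + v)}" if "q \<in> S" for q
  proof -
    have "?h q = indicator {v. cq q cs (x q + v)}" by (auto simp: chi_def indicator_def)
    then show ?thesis using that space_D by (simp add: D'_def)
  qed
  have "Pr cs = (\<integral>\<delta>. (\<Prod>q\<in>S. ?h q (\<delta> q)) * ?C \<partial>PiM S D')"
    unfolding Pr_def PiM_D' pt ..
  also have "\<dots> = (\<integral>\<delta>. (\<Prod>q\<in>S. ?h q (\<delta> q)) \<partial>PiM S D') * ?C" by simp
  also have "(\<integral>\<delta>. (\<Prod>q\<in>S. ?h q (\<delta> q)) \<partial>PiM S D') = (\<Prod>q\<in>S. integral\<^sup>L (D' q) (?h q))"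
    by (rule product_integral_prod[OF finS hi])
  also have "\<dots> = (\<Prod>q\<in>S. prq q cs)"
    by (rule prod.cong) (auto simp: hv prq_def)
  also have "?C = (\<Prod>q\<in>{1..d} - S. prq q cs)"
    by (rule prod.cong) (auto simp: prq_def)
  finally show ?thesis using prod.subset_diff[OF SS, of "\<lambda>q. prq q cs"] by (simp add: mult.commute)
qed

lemma cq_app: "cq q' (cs @ [(q, t, b)]) v = (cq q' cs v \<and> (q = q' \<longrightarrow> (v < t) = b))"
  by (auto simp: cq_def)

lemma prq_nonneg: "0 \<le> prq q cs"
  by (auto simp: prq_def chi_def)

lemma prq_app_other: "q' \<noteq> q \<Longrightarrow> prq q' (cs @ [(q, t, b)]) = prq q' cs"
  by (simp add: prq_def cq_app)

lemma prq_app_le: "prq q (cs @ [(q, t, b)]) \<le> prq q cs"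
proof (cases "q \<in> S")
  case True
  interpret prob_space "D q" by (rule Dp[OF True])
  have "measure (D q) {v. cq q (cs @ [(q, t, b)]) (x q + v)} \<le> measure (D q) {v. cq q cs (x q + v)}"
    by (rule finite_measure_mono) (auto simp: cq_app sets_cq Ds[OF True])
  then show ?thesis using True by (simp add: prq_def)
next
  case False
  then show ?thesis by (auto simp: prq_def chi_def cq_app)
qed

lemma Pr_app:
  assumes "set (map fst cs) \<subseteq> {1..d}" "q \<in> {1..d}"
  shows "Pr (cs @ [(q, t, b)]) = (if prq q cs = 0 then 0 else Pr cs * prq q (cs @ [(q, t, b)]) / prq q cs)"
proof -
  let ?cs' = "cs @ [(q, t, b)]"
  let ?R = "\<Prod>q'\<in>{1..d} - {q}. prq q' cs"
  have "Pr cs = prq q cs * ?R" using Pr_prod[OF assms(1)] prod.remove[of "{1..d}" q] assms(2) by simp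
  moreover have "Pr ?cs' = prq q ?cs' * ?R"
  proof -
    have "Pr ?cs' = (\<Prod>q'\<in>{1..d}. prq q' ?cs')" using assms by (intro Pr_prod) auto
    also have "\<dots> = prq q ?cs' * (\<Prod>q'\<in>{1..d} - {q}. prq q' ?cs')" using prod.remove[of "{1..d}" q] assms(2) by simp
    also have "(\<Prod>q'\<in>{1..d} - {q}. prq q' ?cs') = ?R" by (rule prod.cong) (auto simp: prq_app_other)
    finally show ?thesis .
  qed
  moreover have "prq q cs = 0 \<Longrightarrow> prq q ?cs' = 0" using prq_app_le[of q cs t b] prq_nonneg[of q ?cs'] by simp
  ultimately show ?thesis by (simp add: field_simps)
qed

lemma Pr_Nil: "Pr [] = 1"
proof -
  interpret prob_space "PiM S D" by (rule prob_PiM)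
  show ?thesis by (simp add: Pr_def chi_def prob_space)
qed

definition prqm :: "nat \<Rightarrow> nat \<Rightarrow> real \<Rightarrow> nat \<Rightarrow> real \<Rightarrow> real" where
  "prqm q hl lo hh hi = (if q \<in> S then
      (if 0 < hl \<and> 0 < hh \<and> \<not> lo < hi then 0
       else (if 0 < hh then cdf_oracle D q (hi - x q) else 1) - (if 0 < hl then cdf_oracle D q (lo - x q) else 0))
    else (if (0 < hl \<and> x q < lo) \<or> (0 < hh \<and> \<not> x q < hi) then 0 else 1))"

lemma prqm_correct:
  assumes "\<And>v. isem hl lo hh hi v = cq q cs v"
  shows "prqm q hl lo hh hi = prq q cs"
proof (cases "q \<in> S")
  case False
  then show ?thesis using assms[of "x q"] by (auto simp: prqm_def prq_def chi_def isem_def)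
next
  case True
  interpret prob_space "D q" by (rule Dp[OF True])
  have sp: "space (D q) = UNIV" using space_D[OF True] .
  have sb: "\<And>a::real. {..<a} \<in> sets (D q)" using Ds[OF True] by simp
  have sb2: "\<And>a::real. {a..} \<in> sets (D q)" using Ds[OF True] by simp
  have set: "{v. cq q cs (x q + v)} = {v. isem hl lo hh hi (x q + v)}" using assms by simp
  let ?A = "{v. isem hl lo hh hi (x q + v)}"
  have m: "measure (D q) ?A = prqm q hl lo hh hi"
  proof (cases "0 < hl")
    case hl: True
    show ?thesis
    proof (cases "0 < hh")
      case hh: True
      show ?thesis
      proof (cases "lo < hi")
        case False
        then have "?A = {}" using hl hh by (auto simp: isem_def)
        then show ?thesis using True hl hh False by (simp add: prqm_def)
      next
        case lohi: True
        have "?A = {..<hi - x q} - {..<lo - x q}" using hl hh by (auto simp: isem_def)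
        moreover have "measure (D q) ({..<hi - x q} - {..<lo - x q}) = measure (D q) {..<hi - x q} - measure (D q) {..<lo - x q}"
          using lohi by (intro finite_measure_Diff sb) auto
        ultimately show ?thesis using True hl hh lohi by (simp add: prqm_def cdf_oracle_def)
      qed
    next
      case hh: False
      have "?A = space (D q) - {..<lo - x q}" using hl hh sp by (auto simp: isem_def)
      moreover have "measure (D q) (space (D q) - {..<lo - x q}) = 1 - measure (D q) {..<lo - x q}"
        using prob_compl[OF sb] by simp
      ultimately show ?thesis using True hl hh by (simp add: prqm_def cdf_oracle_def)
    qed
  next
    case hl: False
    show ?thesis
    proof (cases "0 < hh")
      case hh: True
      have "?A = {..<hi - x q}" using hl hh by (auto simp: isem_def)
      then show ?thesis using True hl hh by (simp add: prqm_def cdf_oracle_def)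
    next
      case hh: False
      have "?A = space (D q)" using hl hh sp by (auto simp: isem_def)
      then show ?thesis using True hl hh prob_space by (simp add: prqm_def)
    qed
  qed
  then show ?thesis using True set by (simp add: prq_def)
qed

abbreviation "NI \<equiv> einf 0 ts"
abbreviation "nn \<equiv> ens_size ts"
definition pth :: "nat \<Rightarrow> cons list" where "pth c = ipath (NI ! c)"
definition w :: "nat \<Rightarrow> real" where "w c = wt (fst (NI ! c))"

definition chic :: "cons list \<Rightarrow> (nat \<Rightarrow> real) \<Rightarrow> real" where
  "chic cs \<delta> = chi (ind cs (perturb_pt x S \<delta>))"

lemma meas_comp: "q \<in> S \<Longrightarrow> (\<lambda>\<delta>. \<delta> q) \<in> borel_measurable (PiM S D)"
  using measurable_component_singleton[of q S D] measurable_cong_sets[OF refl Ds[of q], of "PiM S D"] by simp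

lemma pred_ind: "Measurable.pred (PiM S D) (\<lambda>\<delta>. ind cs (perturb_pt x S \<delta>))"
proof (induction cs)
  case Nil
  then show ?case by simp
next
  case (Cons c cs)
  obtain q t b where c: "c = (q, t, b)" by (cases c) auto
  have e: "(\<lambda>\<delta>. ind (c # cs) (perturb_pt x S \<delta>)) = (\<lambda>\<delta>. ((perturb_pt x S \<delta> q < t) = b) \<and> ind cs (perturb_pt x S \<delta>))"
    by (simp add: ind_def c)
  show ?case
  proof (cases "q \<in> S")
    case True
    have m[measurable]: "(\<lambda>\<delta>. \<delta> q) \<in> borel_measurable (PiM S D)" by (rule meas_comp[OF True])
    note Cons[measurable]
    have e2: "perturb_pt x S \<delta> q = x q + \<delta> q" for \<delta> using True by (simp add: perturb_pt_def)
    show ?thesis unfolding e e2 by measurable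
  next
    case False
    note Cons[measurable]
    have e2: "perturb_pt x S \<delta> q = x q" for \<delta> using False by (simp add: perturb_pt_def)
    show ?thesis unfolding e e2 by measurable
  qed
qed

lemma int_chic: "integrable (PiM S D) (chic cs)"
proof -
  interpret prob_space "PiM S D" by (rule prob_PiM)
  have m: "chic cs \<in> borel_measurable (PiM S D)"
    unfolding chic_def chi_def by (rule measurable_If[OF _ _ predE[OF pred_ind]]) auto
  show ?thesis by (rule integrable_const_bound[where B = 1]) (auto simp: chic_def chi_def m)
qed

lemma ens_eval_sum: "ens_eval ts v = (\<Sum>c<nn. w c * chi (ind (pth c) v))"
proof -
  have "ens_eval ts v = sum_list (map (\<lambda>e. wt (fst e) * (if ind (ipath e) v then 1 else 0)) NI)"
    using einf_eval[of v 0 ts] by simp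
  also have "\<dots> = (\<Sum>c<nn. w c * chi (ind (pth c) v))"
    by (simp add: sum_list_sum_nth atLeast0LessThan w_def pth_def chi_def)
  finally show ?thesis .
qed

definition FX0 where "FX0 = (\<Sum>c<nn. w c * chi (ind (pth c) x))"
definition A0 where "A0 = (\<Sum>m<nn. w m * Pr (pth m))"
definition Q0 where "Q0 = (\<Sum>l<nn. w l * (\<Sum>m<nn. w m * Pr (pth l @ pth m)))"

lemma Pr_chic: "integral\<^sup>L (PiM S D) (chic cs) = Pr cs" unfolding Pr_def chic_def[abs_def] ..

lemma chi_mult: "chi a * chi b = chi (a \<and> b)" by (simp add: chi_def)
lemma ind_append: "ind (a @ b) v = (ind a v \<and> ind b v)" by (simp add: ind_def ball_Un)

lemma PG2_eq: "PG2 ts x S D = Q0 - 2 * FX0 * A0 + FX0\<^sup>2"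
proof -
  interpret prob_space "PiM S D" by (rule prob_PiM)
  have fx: "ens_eval ts x = FX0" by (simp add: ens_eval_sum FX0_def)
  let ?E = "\<lambda>\<delta>. (\<Sum>c<nn. w c * chic (pth c) \<delta>)"
  let ?QQ = "\<lambda>\<delta>. (\<Sum>l<nn. w l * (\<Sum>m<nn. w m * chic (pth l @ pth m) \<delta>))"
  have pt: "(ens_eval ts (perturb_pt x S \<delta>) - ens_eval ts x)\<^sup>2 = ?QQ \<delta> + (- 2 * FX0) * ?E \<delta> + FX0\<^sup>2" for \<delta>
  proof -
    have e: "ens_eval ts (perturb_pt x S \<delta>) = ?E \<delta>" by (simp add: ens_eval_sum chic_def)
    have "?E \<delta> * ?E \<delta> = ?QQ \<delta>"
      by (simp add: sum_distrib_left sum_distrib_right chic_def chi_mult[symmetric] ind_append ac_simps)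
    then show ?thesis unfolding e fx by (simp add: power2_eq_square algebra_simps)
  qed
  have iE: "integrable (PiM S D) ?E" by (auto intro!: integrable_sum integrable_mult_right int_chic)
  have iQ: "integrable (PiM S D) ?QQ" by (auto intro!: integrable_sum integrable_mult_right int_chic)
  have "PG2 ts x S D = (\<integral>\<delta>. ?QQ \<delta> + (- 2 * FX0) * ?E \<delta> + FX0\<^sup>2 \<partial>PiM S D)"
    unfolding PG2_def pt ..
  also have "\<dots> = (\<integral>\<delta>. ?QQ \<delta> \<partial>PiM S D) + (- 2 * FX0) * (\<integral>\<delta>. ?E \<delta> \<partial>PiM S D) + FX0\<^sup>2"
    using iE iQ prob_space by (simp)
  also have "(\<integral>\<delta>. ?E \<delta> \<partial>PiM S D) = A0"
    by (simp add: int_chic Pr_chic A0_def)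
  also have "(\<integral>\<delta>. ?QQ \<delta> \<partial>PiM S D) = Q0"
    by (simp add: int_chic Pr_chic Q0_def)
  finally show ?thesis by simp
qed

end

fun wn :: "instr \<Rightarrow> nat set" where
  "wn (NConst r _) = {r}" | "wn (NAdd r _ _) = {r}" | "wn (NSub r _ _) = {r}" | "wn (NLoad r _ _) = {r}" | "wn _ = {}"
fun wr :: "instr \<Rightarrow> nat set" where
  "wr (RConst r _) = {r}" | "wr (RAdd r _ _) = {r}" | "wr (RSub r _ _) = {r}" | "wr (RMul r _ _) = {r}"
| "wr (RDiv r _ _) = {r}" | "wr (RLoad r _ _) = {r}" | "wr (Cdf r _ _) = {r}" | "wr _ = {}"
fun wnb :: "instr \<Rightarrow> nat set" where
  "wnb (NStore k _ _) = {k}" | "wnb _ = {}"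
fun wrb :: "instr \<Rightarrow> nat set" where
  "wrb (RStore k _ _) = {k}" | "wrb _ = {}"

fun cw :: "(instr \<Rightarrow> nat set) \<Rightarrow> com \<Rightarrow> nat set" where
  "cw f SKIP = {}"
| "cw f (B i) = f i"
| "cw f (c1 ;; c2) = cw f c1 \<union> cw f c2"
| "cw f (IfN a b c1 c2) = cw f c1 \<union> cw f c2"
| "cw f (IfR a b c1 c2) = cw f c1 \<union> cw f c2"
| "cw f (WhileN a b c) = cw f c"

definition frm :: "nat set \<Rightarrow> nat set \<Rightarrow> nat set \<Rightarrow> nat set \<Rightarrow> mstate \<Rightarrow> mstate \<Rightarrow> bool" where
  "frm NR RR NB RB s s' \<longleftrightarrow> (\<forall>r. r \<notin> NR \<longrightarrow> nreg s' r = nreg s r) \<and> (\<forall>r. r \<notin> RR \<longrightarrow> rreg s' r = rreg s r) \<and>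
     (\<forall>b. b \<notin> NB \<longrightarrow> nmem s' b = nmem s b) \<and> (\<forall>b. b \<notin> RB \<longrightarrow> rmem s' b = rmem s b)"

definition FR :: "com \<Rightarrow> mstate \<Rightarrow> mstate \<Rightarrow> bool" where
  "FR c = frm (cw wn c) (cw wr c) (cw wnb c) (cw wrb c)"

lemma frm_refl: "frm NR RR NB RB s s" by (simp add: frm_def)

lemma frm_trans: "frm NR RR NB RB s1 s2 \<Longrightarrow> frm NR' RR' NB' RB' s2 s3 \<Longrightarrow>
   frm (NR \<union> NR') (RR \<union> RR') (NB \<union> NB') (RB \<union> RB') s1 s3"
  by (simp add: frm_def)

lemma frm_mono: "frm NR RR NB RB s1 s2 \<Longrightarrow> NR \<subseteq> NR' \<Longrightarrow> RR \<subseteq> RR' \<Longrightarrow> NB \<subseteq> NB' \<Longrightarrow> RB \<subseteq> RB' \<Longrightarrow>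
   frm NR' RR' NB' RB' s1 s2"
  by (auto simp: frm_def)

lemma bs_frm: "bs F c s k s' \<Longrightarrow> FR c s s'"
  unfolding FR_def
proof (induction rule: bs.induct)
  case (bs_b i s)
  then show ?case by (cases i) (auto simp: frm_def)
next
  case (bs_seq c1 s k1 s1 c2 k2 s2)
  then show ?case using frm_trans by fastforce
next
  case (bs_whT s a b c k s1 k2 s2)
  then show ?case using frm_trans[of "cw wn c" "cw wr c" "cw wnb c" "cw wrb c" s s1] by (simp add: frm_def)
qed (auto simp: frm_def)

lemma run_frm: "lf c \<Longrightarrow> FR c s (run F c s)"
  using bs_frm lf_bs by blast

lemma ex_run_FR: "ex_run F c s K R \<Longrightarrow> ex_run F c s K (\<lambda>s'. R s' \<and> FR c s s')"
  unfolding ex_run_def using bs_frm by blast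

abbreviation "rZ \<equiv> 0::nat"
abbreviation "rN \<equiv> 1::nat"
abbreviation "rC \<equiv> 2::nat"
abbreviation "rK \<equiv> 3::nat"
abbreviation "rCUR \<equiv> 4::nat"
abbreviation "rPR \<equiv> 5::nat"
abbreviation "rW \<equiv> 6::nat"
abbreviation "rQ \<equiv> 7::nat"
abbreviation "rT1 \<equiv> 8::nat"
abbreviation "rT2 \<equiv> 9::nat"
abbreviation "rONE \<equiv> 10::nat"
abbreviation "rSTK \<equiv> 11::nat"
abbreviation "rV \<equiv> 12::nat"
abbreviation "rHL \<equiv> 13::nat"
abbreviation "rHH \<equiv> 14::nat"
abbreviation "rKM \<equiv> 15::nat"
abbreviation "rNP1 \<equiv> 16::nat"
abbreviation "rDR \<equiv> 17::nat"

abbreviation "xOUT \<equiv> 0::nat"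
abbreviation "xACC \<equiv> 1::nat"
abbreviation "xQS \<equiv> 2::nat"
abbreviation "xA \<equiv> 3::nat"
abbreviation "xFX \<equiv> 4::nat"
abbreviation "xPB \<equiv> 5::nat"
abbreviation "xLO \<equiv> 6::nat"
abbreviation "xHI \<equiv> 7::nat"
abbreviation "xTT \<equiv> 8::nat"
abbreviation "xRT1 \<equiv> 9::nat"
abbreviation "xRT2 \<equiv> 10::nat"
abbreviation "xRZ \<equiv> 11::nat"
abbreviation "xPX \<equiv> 12::nat"
abbreviation "xPF1 \<equiv> 13::nat"
abbreviation "xPF2 \<equiv> 14::nat"
abbreviation "xPRES \<equiv> 15::nat"
abbreviation "xPV0 \<equiv> 17::nat"
abbreviation "xPP \<equiv> 18::nat"
abbreviation "xP \<equiv> 19::nat"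
abbreviation "xIV \<equiv> 20::nat"

definition IFEQ :: "nat \<Rightarrow> nat \<Rightarrow> com \<Rightarrow> com \<Rightarrow> com" where
  "IFEQ a b c1 c2 = IfN a b c2 (IfN b a c2 c1)"

definition NARROW :: com where
  "NARROW = IfN rZ rDR
    (IfN rZ rHH (IfR xTT xHI (B (RAdd xHI xTT xRZ)) SKIP) (B (RAdd xHI xTT xRZ) ;; B (NConst rHH 1)))
    (IfN rZ rHL (IfR xLO xTT (B (RAdd xLO xTT xRZ)) SKIP) (B (RAdd xLO xTT xRZ) ;; B (NConst rHL 1)))"

definition PRQ :: com where
  "PRQ = B (NLoad rT2 6 rQ) ;; B (RLoad xPX 1 rQ) ;;
   IfN rZ rT2
     (IfN rZ rHH (B (RSub xRT1 xHI xPX) ;; B (Cdf xPF1 rQ xRT1)) (B (RConst xPF1 1)) ;;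
      IfN rZ rHL (B (RSub xRT1 xLO xPX) ;; B (Cdf xPF2 rQ xRT1)) (B (RConst xPF2 0)) ;;
      B (RSub xPRES xPF1 xPF2) ;;
      IfN rZ rHL (IfN rZ rHH (IfR xLO xHI SKIP (B (RConst xPRES 0))) SKIP) SKIP)
     (B (RConst xPRES 1) ;; IfN rZ rHL (IfR xPX xLO (B (RConst xPRES 0)) SKIP) SKIP ;;
      IfN rZ rHH (IfR xPX xHI SKIP (B (RConst xPRES 0))) SKIP)"

definition P1B :: com where
  "P1B = B (NLoad rT1 1 rC) ;;
     IfN rZ rT1 (B (NLoad rT2 3 rC) ;; B (NAdd rV rC rONE) ;; B (NStore 7 rT2 rV) ;; B (NStore 8 rT2 rONE) ;;
                 B (NLoad rT2 4 rC) ;; B (NStore 7 rT2 rV) ;; B (NStore 8 rT2 rZ)) SKIP ;;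
     B (NAdd rC rC rONE)"

definition WB :: com where
  "WB = B (NSub rW rPR rONE) ;; B (NLoad rT1 2 rW) ;;
     IFEQ rT1 rQ (B (RLoad xTT 0 rW) ;; B (NLoad rDR 8 rCUR) ;; NARROW) SKIP ;;
     B (NAdd rCUR rW rZ) ;; B (NLoad rPR 7 rCUR)"

definition P2PRE :: com where
  "P2PRE = B (NLoad rQ 2 rC) ;; B (NAdd rCUR rC rZ) ;; B (NLoad rPR 7 rCUR) ;; B (NConst rHL 0) ;; B (NConst rHH 0)"

definition P2POST :: com where
  "P2POST = B (NStore 9 rC rHL) ;; B (NStore 10 rC rHH) ;; B (RStore 2 rC xLO) ;; B (RStore 3 rC xHI) ;; B (NAdd rC rC rONE)"

definition P2B :: com where
  "P2B = P2PRE ;; (WhileN rZ rPR WB ;; P2POST)"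

definition GB :: com where
  "GB = B (NSub rW rPR rONE) ;; B (NLoad rQ 2 rW) ;; B (NLoad rT1 11 rQ) ;;
     IFEQ rT1 rSTK SKIP (B (NStore 11 rQ rSTK) ;; B (NStore 12 rQ rZ) ;; B (NStore 13 rQ rZ)) ;;
     B (NLoad rHL 12 rQ) ;; B (NLoad rHH 13 rQ) ;; B (RLoad xLO 4 rQ) ;; B (RLoad xHI 5 rQ) ;;
     B (RLoad xTT 0 rW) ;; B (NLoad rDR 8 rCUR) ;; NARROW ;;
     B (NStore 12 rQ rHL) ;; B (NStore 13 rQ rHH) ;; B (RStore 4 rQ xLO) ;; B (RStore 5 rQ xHI) ;;
     B (NAdd rCUR rW rZ) ;; B (NLoad rPR 7 rCUR)"

definition MG :: com where
  "MG = B (NLoad rT2 12 rQ) ;;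
     IfN rZ rT2 (B (RLoad xRT1 4 rQ) ;; IfN rZ rHL (IfR xLO xRT1 (B (RAdd xLO xRT1 xRZ)) SKIP) (B (RAdd xLO xRT1 xRZ) ;; B (NConst rHL 1))) SKIP ;;
     B (NLoad rT2 13 rQ) ;;
     IfN rZ rT2 (B (RLoad xRT1 5 rQ) ;; IfN rZ rHH (IfR xRT1 xHI (B (RAdd xHI xRT1 xRZ)) SKIP) (B (RAdd xHI xRT1 xRZ) ;; B (NConst rHH 1))) SKIP"

definition PARB :: com where
  "PARB = B (NSub rV rPR rONE) ;; B (NLoad rQ 2 rV) ;; B (NLoad rHL 14 rV) ;; B (NLoad rHH 15 rV) ;;
     B (RLoad xLO 6 rV) ;; B (RLoad xHI 7 rV) ;; B (RLoad xTT 0 rV) ;; B (NLoad rDR 8 rC) ;; NARROW ;; PRQ ;;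
     B (RLoad xPV0 8 rV) ;; B (RLoad xPP 9 rV) ;;
     IfR xRZ xPV0 (B (RMul xRT1 xPP xPRES) ;; B (RDiv xP xRT1 xPV0))
       (IfR xPV0 xRZ (B (RMul xRT1 xPP xPRES) ;; B (RDiv xP xRT1 xPV0)) (B (RConst xP 0))) ;;
     B (RLoad xIV 10 rV) ;; B (RLoad xPX 1 rQ) ;;
     IfR xPX xTT (IfN rZ rDR SKIP (B (RConst xIV 0))) (IfN rZ rDR (B (RConst xIV 0)) SKIP)"

definition ROOTB :: com where
  "ROOTB = B (RAdd xP xPB xRZ) ;; B (RConst xIV 1)"

definition ACCB :: com where
  "ACCB = B (RLoad xTT 0 rC) ;; B (RMul xRT1 xTT xP) ;; B (RAdd xACC xACC xRT1) ;;
     IFEQ rK rZ (B (RStore 11 rC xP) ;; B (RMul xRT1 xTT xIV) ;; B (RAdd xFX xFX xRT1)) SKIP"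

definition IB1 :: com where
  "IB1 = B (NLoad rQ 2 rC) ;; B (NLoad rHL 9 rC) ;; B (NLoad rHH 10 rC) ;; B (RLoad xLO 2 rC) ;; B (RLoad xHI 3 rC) ;;
     B (NLoad rT1 11 rQ) ;; IFEQ rT1 rSTK MG SKIP"

definition IB2A :: com where
  "IB2A = B (NStore 14 rC rHL) ;; B (NStore 15 rC rHH) ;; B (RStore 6 rC xLO) ;; B (RStore 7 rC xHI) ;;
     PRQ ;; B (RStore 8 rC xPRES) ;; B (NLoad rPR 7 rC)"

definition IB2B :: com where
  "IB2B = IfN rZ rPR PARB ROOTB"

definition IB2C :: com where
  "IB2C = B (RStore 9 rC xP) ;; B (RStore 10 rC xIV) ;;
     B (NLoad rT1 1 rC) ;; IfN rZ rT1 SKIP ACCB ;; B (NAdd rC rC rONE)"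

definition IB2 :: com where "IB2 = IB2A ;; (IB2B ;; IB2C)"

definition IB :: com where "IB = IB1 ;; IB2"

definition OPRE :: com where "OPRE = B (RConst xACC 0) ;; B (NConst rC 0)"

definition ONEITER :: com where
  "ONEITER = OPRE ;; WhileN rC rN IB"

definition ZEROIT :: com where
  "ZEROIT = B (RConst xPB 1) ;; (ONEITER ;; B (RAdd xA xACC xRZ))"

definition LPRE :: com where
  "LPRE = B (RLoad xPB 11 rKM) ;; B (NAdd rCUR rKM rZ) ;; B (NLoad rPR 7 rCUR)"

definition LPOST :: com where
  "LPOST = B (RLoad xTT 0 rKM) ;; B (RMul xRT1 xTT xACC) ;; B (RAdd xQS xQS xRT1)"

definition LEAFIT :: com where
  "LEAFIT = LPRE ;; (WhileN rZ rPR GB ;; (ONEITER ;; LPOST))"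

definition KPRE :: com where
  "KPRE = B (NSub rKM rK rONE) ;; B (NLoad rT1 1 rKM)"

definition KPOS :: com where
  "KPOS = KPRE ;; IfN rZ rT1 SKIP LEAFIT"

definition OB :: com where
  "OB = B (NAdd rSTK rK rONE) ;; (IfN rZ rK KPOS ZEROIT ;; B (NAdd rK rK rONE))"

definition INIT :: com where
  "INIT = B (NConst rONE 1) ;; B (NLoad rN 0 rONE) ;; B (NAdd rNP1 rN rONE)"

definition PH1 :: com where "PH1 = B (NConst rC 0) ;; WhileN rC rN P1B"
definition PH2 :: com where "PH2 = B (NConst rC 0) ;; WhileN rC rN P2B"
definition PH3 :: com where "PH3 = B (NConst rK 0) ;; WhileN rK rNP1 OB"

definition FIN :: com where
  "FIN = B (RMul xRT1 xFX xA) ;; B (RAdd xRT1 xRT1 xRT1) ;; B (RSub xOUT xQS xRT1) ;;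
     B (RMul xRT2 xFX xFX) ;; B (RAdd xOUT xOUT xRT2)"

definition PROG :: com where "PROG = INIT ;; PH1 ;; PH2 ;; PH3 ;; FIN"

definition "nHL hl (dr::nat) = (if 0 < dr then hl else if 0 < hl then hl else (1::nat))"
definition "nLO (hl::nat) lo (t::real) (dr::nat) = (if 0 < dr then lo else if 0 < hl then (if lo < t then t else lo) else t)"
definition "nHH hh (dr::nat) = (if 0 < dr then (if 0 < hh then hh else 1) else (hh::nat))"
definition "nHI (hh::nat) hi (t::real) (dr::nat) = (if 0 < dr then (if 0 < hh then (if t < hi then t else hi) else t) else hi)"

lemma nar_sem: "isem (nHL hl dr) (nLO hl lo t dr) (nHH hh dr) (nHI hh hi t dr) v = (isem hl lo hh hi v \<and> (v < t) = (0 < dr))"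
  by (auto simp: isem_def nHL_def nLO_def nHH_def nHI_def)

lemma run_NARROW:
  assumes "nreg s 0 = 0" "rreg s 11 = 0"
  shows "run F NARROW s = s\<lparr>nreg := (nreg s)(13 := nHL (nreg s 13) (nreg s 17), 14 := nHH (nreg s 14) (nreg s 17)),
     rreg := (rreg s)(6 := nLO (nreg s 13) (rreg s 6) (rreg s 8) (nreg s 17), 7 := nHI (nreg s 14) (rreg s 7) (rreg s 8) (nreg s 17))\<rparr>"
  using assms unfolding NARROW_def
  by (cases s) (auto simp: nHL_def nLO_def nHH_def nHI_def fun_eq_iff)

definition prqmach :: "(nat \<Rightarrow> real \<Rightarrow> real) \<Rightarrow> nat \<Rightarrow> real \<Rightarrow> nat \<Rightarrow> nat \<Rightarrow> real \<Rightarrow> nat \<Rightarrow> real \<Rightarrow> real" where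
  "prqmach F sf xq q hl lo hh hi = (if 0 < sf then
      (if 0 < hl \<and> 0 < hh \<and> \<not> lo < hi then 0
       else (if 0 < hh then F q (hi - xq) else 1) - (if 0 < hl then F q (lo - xq) else 0))
    else (if (0 < hl \<and> xq < lo) \<or> (0 < hh \<and> \<not> xq < hi) then 0 else 1))"

lemma PRQ_lf: "lf PRQ" by (simp add: PRQ_def)

lemma run_PRQ:
  assumes "nreg s 0 = 0"
  shows "nreg (run F PRQ s) = (nreg s)(9 := nmem s 6 (nreg s 7))"
    "nmem (run F PRQ s) = nmem s" "rmem (run F PRQ s) = rmem s" "pc (run F PRQ s) = pc s"
    "rreg (run F PRQ s) 15 = prqmach F (nmem s 6 (nreg s 7)) (rmem s 1 (nreg s 7)) (nreg s 7) (nreg s 13) (rreg s 6) (nreg s 14) (rreg s 7)"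
    "r \<notin> {9, 12, 13, 14, 15} \<Longrightarrow> rreg (run F PRQ s) r = rreg s r"
  using assms unfolding PRQ_def prqmach_def by (auto simp: fun_eq_iff)

lemma run_MG:
  assumes "nreg s 0 = 0" "rreg s 11 = 0"
  shows "nmem (run F MG s) = nmem s" "rmem (run F MG s) = rmem s" "pc (run F MG s) = pc s"
    "r \<notin> {9, 13, 14} \<Longrightarrow> nreg (run F MG s) r = nreg s r"
    "r \<notin> {9, 6, 7} \<Longrightarrow> rreg (run F MG s) r = rreg s r"
    "isem (nreg (run F MG s) 13) (rreg (run F MG s) 6) (nreg (run F MG s) 14) (rreg (run F MG s) 7) v =
     (isem (nreg s 13) (rreg s 6) (nreg s 14) (rreg s 7) v \<and>
      isem (nmem s 12 (nreg s 7)) (rmem s 4 (nreg s 7)) (nmem s 13 (nreg s 7)) (rmem s 5 (nreg s 7)) v)"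
  using assms unfolding MG_def by (auto simp: isem_def)

lemma run_PARB:
  fixes F :: "nat \<Rightarrow> real \<Rightarrow> real"
  assumes "nreg s 0 = 0" "rreg s 11 = 0" "nreg s 10 = 1" "0 < nreg s 5"
  defines "v \<equiv> nreg s 5 - 1"
  defines "q \<equiv> nmem s 2 v"
  defines "dr \<equiv> nmem s 8 (nreg s 2)"
  defines "t \<equiv> rmem s 0 v"
  defines "pres \<equiv> prqmach F (nmem s 6 q) (rmem s 1 q) q (nHL (nmem s 14 v) dr) (nLO (nmem s 14 v) (rmem s 6 v) t dr)
             (nHH (nmem s 15 v) dr) (nHI (nmem s 15 v) (rmem s 7 v) t dr)"
  shows "nmem (run F PARB s) = nmem s" "rmem (run F PARB s) = rmem s" "pc (run F PARB s) = pc s"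
    "rreg (run F PARB s) 19 = (if rmem s 8 v = 0 then 0 else rmem s 9 v * pres / rmem s 8 v)"
    "rreg (run F PARB s) 20 = (if (rmem s 1 q < t) = (0 < dr) then rmem s 10 v else 0)"
  using assms unfolding PARB_def by (auto simp: run_NARROW run_PRQ)

context pg
begin

abbreviation "FF \<equiv> cdf_oracle D"
definition "s0 = init_state d ts x S"

definition "sub c = fst (NI ! c)"
definition "kd c = fst (nodeinfo c (sub c))"
definition "ft c = fst (snd (nodeinfo c (sub c)))"
definition "lc c = fst (snd (snd (nodeinfo c (sub c))))"
definition "rc c = fst (snd (snd (snd (nodeinfo c (sub c)))))"
definition "vl c = snd (snd (snd (snd (nodeinfo c (sub c)))))"
definition "parf c = ipar (NI ! c)"
definition "dirf c = idir (NI ! c)"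

lemma s0_basic: "nreg s0 = (\<lambda>_. 0)" "rreg s0 = (\<lambda>_. 0)" "pc s0 = 0"
  by (simp_all add: s0_def init_state_def Let_def)

lemma s0_nmem:
  "nmem s0 0 (Suc 0) = nn"
  "c < nn \<Longrightarrow> nmem s0 (Suc 0) c = kd c"
  "c < nn \<Longrightarrow> nmem s0 2 c = ft c"
  "c < nn \<Longrightarrow> nmem s0 3 c = lc c"
  "c < nn \<Longrightarrow> nmem s0 4 c = rc c"
  "q \<in> {1..d} \<Longrightarrow> nmem s0 6 q = (if q \<in> S then 1 else 0)"
  "nmem s0 7 = (\<lambda>_. 0)" "nmem s0 8 = (\<lambda>_. 0)" "nmem s0 9 = (\<lambda>_. 0)" "nmem s0 10 = (\<lambda>_. 0)"
  "nmem s0 11 = (\<lambda>_. 0)" "nmem s0 12 = (\<lambda>_. 0)" "nmem s0 13 = (\<lambda>_. 0)" "nmem s0 14 = (\<lambda>_. 0)" "nmem s0 15 = (\<lambda>_. 0)"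
  by (auto simp: s0_def init_state_def Let_def arr_def enodes_nth kd_def ft_def lc_def rc_def sub_def)

lemma s0_rmem:
  "c < nn \<Longrightarrow> rmem s0 0 c = vl c"
  "q \<in> {1..d} \<Longrightarrow> rmem s0 (Suc 0) q = x q"
  by (auto simp: s0_def init_state_def Let_def arr_def enodes_nth vl_def sub_def)

lemma node_Node:
  assumes "c < nn" "sub c = Node q t a b"
  shows "kd c = 1" "ft c = q" "vl c = t" "lc c = c + 1" "rc c = c + 1 + tsize a"
    "c + 1 < nn" "c + 1 + tsize a < nn"
    "parf (c + 1) = Some c" "dirf (c + 1)" "pth (c + 1) = pth c @ [(q, t, True)]"
    "parf (c + 1 + tsize a) = Some c" "\<not> dirf (c + 1 + tsize a)" "pth (c + 1 + tsize a) = pth c @ [(q, t, False)]"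
proof -
  have h: "c + tsize (Node q t a b) \<le> nn \<and>
   NI ! (c + 1) = (a, Some c, True, ipath (NI ! c) @ [(q, t, True)]) \<and>
   NI ! (c + 1 + tsize a) = (b, Some c, False, ipath (NI ! c) @ [(q, t, False)])"
    using einf_children[of c ts 0 q t a b] assms by (simp add: sub_def)
  show "kd c = 1" "ft c = q" "vl c = t" "lc c = c + 1" "rc c = c + 1 + tsize a"
    using assms by (simp_all add: kd_def ft_def vl_def lc_def rc_def)
  show "c + 1 < nn" "c + 1 + tsize a < nn" using h tsize_pos[of b] by simp_all
  show "parf (c + 1) = Some c" "dirf (c + 1)" "pth (c + 1) = pth c @ [(q, t, True)]"
    "parf (c + 1 + tsize a) = Some c" "\<not> dirf (c + 1 + tsize a)" "pth (c + 1 + tsize a) = pth c @ [(q, t, False)]"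
    using h by (simp_all add: parf_def dirf_def pth_def)
qed

lemma node_Leaf:
  assumes "sub c = Leaf y"
  shows "kd c = 0" "ft c = 0" "vl c = y" "w c = y"
  using assms by (simp_all add: kd_def ft_def vl_def w_def sub_def[symmetric])

lemma node_cases: "(\<exists>y. sub c = Leaf y) \<or> (\<exists>q t a b. sub c = Node q t a b)"
  by (cases "sub c") auto

lemma kd_cases: "kd c = 0 \<or> kd c = 1"
  using node_cases[of c] by (auto simp: kd_def)

lemma w_internal: "kd c = 1 \<Longrightarrow> w c = 0"
  using node_cases[of c] by (auto simp: kd_def w_def sub_def)

lemma w_leaf: "kd c = 0 \<Longrightarrow> w c = vl c"
  using node_cases[of c] by (auto simp: kd_def w_def sub_def vl_def)

lemma node_par:
  assumes "c < nn"
  shows "parf c = None \<Longrightarrow> pth c = []"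
    and "parf c = Some v \<Longrightarrow> v < c \<and> kd v = 1 \<and> pth c = pth v @ [(ft v, vl v, dirf c)] \<and>
           (if dirf c then c = lc v else c = rc v)"
proof -
  have P: "(ipar (NI ! c) = None \<and> ipath (NI ! c) = []) \<or>
   (\<exists>j<c. ipar (NI ! c) = Some j \<and>
     (\<exists>q t a b. fst (NI ! j) = Node q t a b \<and>
        (if idir (NI ! c) then c = j + 1 else c = j + 1 + tsize a) \<and>
        ipath (NI ! c) = ipath (NI ! j) @ [(q, t, idir (NI ! c))]))"
    using einf_parent[of c ts 0] assms by simp
  show "parf c = None \<Longrightarrow> pth c = []" using P by (auto simp: parf_def pth_def)
  assume "parf c = Some v"
  then obtain q t a b where "v < c" "fst (NI ! v) = Node q t a b"
        "(if dirf c then c = v + 1 else c = v + 1 + tsize a)"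
        "pth c = pth v @ [(q, t, dirf c)]" using P by (auto simp: parf_def pth_def dirf_def)
  then show "v < c \<and> kd v = 1 \<and> pth c = pth v @ [(ft v, vl v, dirf c)] \<and> (if dirf c then c = lc v else c = rc v)"
    by (simp add: kd_def ft_def vl_def lc_def rc_def sub_def split: if_splits)
qed

lemma node_feats:
  assumes "c < nn"
  shows "set (map fst (pth c)) \<subseteq> {1..d}" "kd c = 1 \<Longrightarrow> ft c \<in> {1..d}"
proof -
  have e: "NI ! c \<in> set NI" using assms by simp
  from einf_feats[OF wf e] show "set (map fst (pth c)) \<subseteq> {1..d}" by (simp add: pth_def)
  assume "kd c = 1"
  then obtain q t a b where "sub c = Node q t a b" using node_cases[of c] by (auto simp: kd_def)
  with einf_feats[OF wf e] show "ft c \<in> {1..d}" by (simp add: ft_def sub_def)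
qed

lemma pth_len: "c < nn \<Longrightarrow> length (pth c) \<le> c"
proof (induction c rule: less_induct)
  case (less c)
  show ?case
  proof (cases "parf c")
    case None
    then show ?thesis using node_par(1)[OF less.prems] by simp
  next
    case (Some v)
    then have "v < c" "pth c = pth v @ [(ft v, vl v, dirf c)]" using node_par(2)[OF less.prems] by auto
    then show ?thesis using less.IH[of v] less.prems by simp
  qed
qed

definition CtxB :: "mstate \<Rightarrow> bool" where
  "CtxB s \<longleftrightarrow> nreg s 0 = 0 \<and> nreg s 10 = 1 \<and> nreg s 1 = nn \<and> nreg s 16 = Suc nn \<and> rreg s 11 = 0 \<and>
     nmem s 0 = nmem s0 0 \<and> nmem s 1 = nmem s0 1 \<and> nmem s 2 = nmem s0 2 \<and> nmem s 3 = nmem s0 3 \<and>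
     nmem s 4 = nmem s0 4 \<and> nmem s 6 = nmem s0 6 \<and> rmem s 0 = rmem s0 0 \<and> rmem s 1 = rmem s0 1"

definition parspec :: "nat \<Rightarrow> nat \<Rightarrow> nat" where
  "parspec j c = (if c < nn then (case parf c of None \<Rightarrow> 0 | Some v \<Rightarrow> if v < j then Suc v else 0) else 0)"

definition dirspec :: "nat \<Rightarrow> nat \<Rightarrow> nat" where
  "dirspec j c = (if c < nn \<and> (\<exists>v. parf c = Some v \<and> v < j) \<and> dirf c then 1 else 0)"

lemma par_child: "c < nn \<Longrightarrow> parf c = Some j \<Longrightarrow> \<exists>q t a b. sub j = Node q t a b \<and> (c = lc j \<or> c = rc j)"
  using node_par(2)[of c j] node_cases[of j] by (auto simp: kd_def split: if_splits)

lemma kd_Node: "sub j = Node q t a b \<Longrightarrow> kd j = 1" by (simp add: kd_def)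

lemma not_par_leaf: "kd j = 0 \<Longrightarrow> c < nn \<Longrightarrow> parf c \<noteq> Some j"
  using par_child kd_Node by fastforce

lemma par_step_leaf: "kd j = 0 \<Longrightarrow> parspec (Suc j) = parspec j"
proof (rule ext)
  fix c assume k: "kd j = 0"
  show "parspec (Suc j) c = parspec j c"
  proof (cases "c < nn")
    case True
    then have "parf c \<noteq> Some j" using not_par_leaf[OF k] by blast
    then show ?thesis by (cases "parf c") (auto simp: parspec_def less_Suc_eq)
  qed (simp add: parspec_def)
qed

lemma dir_step_leaf: "kd j = 0 \<Longrightarrow> dirspec (Suc j) = dirspec j"
proof (rule ext)
  fix c assume k: "kd j = 0"
  show "dirspec (Suc j) c = dirspec j c"
  proof (cases "c < nn")
    case True
    then have "parf c \<noteq> Some j" using not_par_leaf[OF k] by blast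
    then have "(\<exists>v. parf c = Some v \<and> v < Suc j) = (\<exists>v. parf c = Some v \<and> v < j)" by (auto simp: less_Suc_eq)
    then show ?thesis by (simp add: dirspec_def)
  qed (simp add: dirspec_def)
qed

lemma par_step_node:
  assumes "j < nn" "sub j = Node q t a b"
  shows "parspec (Suc j) = (parspec j)(lc j := Suc j, rc j := Suc j)"
    "dirspec (Suc j) = (dirspec j)(lc j := 1, rc j := 0)"
proof -
  note N = node_Node[OF assms]
  have o: "c < nn \<Longrightarrow> parf c = Some j \<Longrightarrow> c = lc j \<or> c = rc j" for c
    using par_child assms by blast
  show "parspec (Suc j) = (parspec j)(lc j := Suc j, rc j := Suc j)"
    using N o by (auto simp: parspec_def fun_eq_iff less_Suc_eq split: option.splits)
  show "dirspec (Suc j) = (dirspec j)(lc j := 1, rc j := 0)"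
    using N o by (auto simp: dirspec_def fun_eq_iff less_Suc_eq)
qed

lemma INIT_props: "CtxB (run FF INIT s0) \<and> nmem (run FF INIT s0) 7 = (\<lambda>_. 0) \<and> nmem (run FF INIT s0) 8 = (\<lambda>_. 0) \<and>
   nmem (run FF INIT s0) 11 = (\<lambda>_. 0) \<and> rreg (run FF INIT s0) 2 = 0 \<and> rreg (run FF INIT s0) 4 = 0"
  by (simp add: INIT_def CtxB_def s0_nmem s0_basic)

definition I1 :: "mstate \<Rightarrow> bool" where
  "I1 s \<longleftrightarrow> CtxB s \<and> nreg s 2 \<le> nn \<and> nmem s 7 = parspec (nreg s 2) \<and> nmem s 8 = dirspec (nreg s 2) \<and>
     nmem s 11 = (\<lambda>_. 0) \<and> rreg s 2 = 0 \<and> rreg s 4 = 0"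

lemma P1B_step:
  assumes "I1 s" "nreg s 2 < nreg s 1"
  shows "I1 (run FF P1B s) \<and> nn - nreg (run FF P1B s) 2 < nn - nreg s 2"
proof -
  obtain j where j: "nreg s 2 = j" "j < nn" using assms by (auto simp: I1_def CtxB_def)
  have C: "CtxB s" using assms by (simp add: I1_def)
  show ?thesis
  proof (cases "kd j = 0")
    case True
    then show ?thesis using assms j C
      by (simp add: P1B_def I1_def CtxB_def s0_nmem par_step_leaf dir_step_leaf)
  next
    case False
    then obtain q t a b where sj: "sub j = Node q t a b" using node_cases[of j] by (auto dest: node_Leaf(1))
    note N = node_Node[OF j(2) sj]
    show ?thesis using assms j C N
      by (simp add: P1B_def I1_def CtxB_def s0_nmem par_step_node[OF j(2) sj])
  qed
qed

lemma PH1_run: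
  assumes "CtxB s" "nmem s 7 = (\<lambda>_. 0)" "nmem s 8 = (\<lambda>_. 0)" "nmem s 11 = (\<lambda>_. 0)" "rreg s 2 = 0" "rreg s 4 = 0"
  shows "ex_run FF PH1 s (1 + (nn * (clen P1B + 2) + 2)) (\<lambda>s'. I1 s' \<and> nreg s' 2 = nn)"
proof -
  let ?s1 = "run FF (B (NConst 2 0)) s"
  have I: "I1 ?s1" using assms by (simp add: I1_def CtxB_def parspec_def dirspec_def fun_eq_iff split: option.split)
  have W: "ex_run FF (WhileN 2 1 P1B) ?s1 ((nn - nreg ?s1 2) * (clen P1B + 2) + 2) (\<lambda>s'. I1 s' \<and> \<not> nreg s' 2 < nreg s' 1)"
  proof (rule ex_run_while[where \<mu> = "\<lambda>s. nn - nreg s 2" and I = I1, OF I])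
    fix s assume "I1 s" "nreg s 2 < nreg s 1"
    from P1B_step[OF this] show "ex_run FF P1B s (clen P1B) (\<lambda>s'. I1 s' \<and> nn - nreg s' 2 < nn - nreg s 2)"
      by (intro ex_run_lf) (auto simp: P1B_def)
  qed
  have "ex_run FF PH1 s (clen (B (NConst 2 0)) + ((nn - nreg ?s1 2) * (clen P1B + 2) + 2)) (\<lambda>s'. I1 s' \<and> \<not> nreg s' 2 < nreg s' 1)"
    unfolding PH1_def using ex_run_seq_lf[OF _ W] by simp
  then show ?thesis by (rule ex_run_mono) (auto simp: I1_def CtxB_def)
qed


definition "PARF = parspec nn"
definition "DIRF = dirspec nn"

lemma PARF_None: "c < nn \<Longrightarrow> parf c = None \<Longrightarrow> PARF c = 0"
  by (simp add: PARF_def parspec_def)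

lemma PARF_Some: "c < nn \<Longrightarrow> parf c = Some v \<Longrightarrow> PARF c = Suc v"
  using node_par(2)[of c v] by (simp add: PARF_def parspec_def)

lemma PARF_pos: "c < nn \<Longrightarrow> 0 < PARF c \<Longrightarrow> parf c = Some (PARF c - 1)"
  using PARF_None[of c] PARF_Some[of c] by (cases "parf c") auto

lemma DIRF_Some: "c < nn \<Longrightarrow> parf c = Some v \<Longrightarrow> (0 < DIRF c) = dirf c"
  using node_par(2)[of c v] by (auto simp: DIRF_def dirspec_def)

lemma cq_Cons[simp]: "cq q ((q', t, b) # cs) v = ((q' = q \<longrightarrow> (v < t) = b) \<and> cq q cs v)"
  by (simp add: cq_def)

lemma cq_Nil[simp]: "cq q [] v" by (simp add: cq_def)

definition ibok :: "nat \<Rightarrow> nat \<Rightarrow> real \<Rightarrow> nat \<Rightarrow> real \<Rightarrow> bool" where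
  "ibok c hl lo hh hi \<longleftrightarrow> (\<forall>v. isem hl lo hh hi v = cq (ft c) (pth c) v)"

definition I2 :: "mstate \<Rightarrow> bool" where
  "I2 s \<longleftrightarrow> CtxB s \<and> nreg s 2 \<le> nn \<and> nmem s 7 = PARF \<and> nmem s 8 = DIRF \<and>
     nmem s 11 = (\<lambda>_. 0) \<and> rreg s 2 = 0 \<and> rreg s 4 = 0 \<and>
     (\<forall>c<nreg s 2. ibok c (nmem s 9 c) (rmem s 2 c) (nmem s 10 c) (rmem s 3 c))"

definition IW :: "nat \<Rightarrow> cons list \<Rightarrow> mstate \<Rightarrow> bool" where
  "IW c suf s \<longleftrightarrow> CtxB s \<and> nmem s 7 = PARF \<and> nmem s 8 = DIRF \<and>
     nmem s 11 = (\<lambda>_. 0) \<and> rreg s 2 = 0 \<and> rreg s 4 = 0 \<and>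
     (\<forall>c'<c. ibok c' (nmem s 9 c') (rmem s 2 c') (nmem s 10 c') (rmem s 3 c')) \<and>
     nreg s 2 = c \<and> c < nn \<and> nreg s 7 = ft c \<and> nreg s 4 < nn \<and> nreg s 5 = PARF (nreg s 4) \<and>
     pth c = pth (nreg s 4) @ suf \<and> (\<forall>v. isem (nreg s 13) (rreg s 6) (nreg s 14) (rreg s 7) v = cq (ft c) suf v)"

lemma WB_lf: "lf WB" by (simp add: WB_def IFEQ_def NARROW_def)

lemma WB_step:
  assumes "IW c suf s" "0 < nreg s 5"
  shows "\<exists>suf'. IW c suf' (run FF WB s) \<and> length (pth (nreg (run FF WB s) 4)) < length (pth (nreg s 4))"
proof -
  obtain cur where cur: "nreg s 4 = cur" "cur < nn" using assms by (auto simp: IW_def)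
  have C: "CtxB s" using assms by (simp add: IW_def)
  have pr: "nreg s 5 = PARF cur" using assms cur by (simp add: IW_def)
  obtain v where pv: "parf cur = Some v" using PARF_pos[OF cur(2)] assms(2) pr by auto
  then have PV: "PARF cur = Suc v" using PARF_Some[OF cur(2)] by simp
  have nv: "v < cur" "kd v = 1" "pth cur = pth v @ [(ft v, vl v, dirf cur)]" using node_par(2)[OF cur(2) pv] by auto
  have vn: "v < nn" using nv cur by simp
  have dr: "(0 < DIRF cur) = dirf cur" using DIRF_Some[OF cur(2) pv] .
  let ?suf' = "(ft v, vl v, dirf cur) # suf"
  have pc: "pth c = pth v @ ?suf'" using assms nv cur by (simp add: IW_def)
  have len: "length (pth v) < length (pth cur)" using nv by simp
  show ?thesis
  proof (intro exI[of _ ?suf'] conjI)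
    show "IW c ?suf' (run FF WB s)"
    proof (cases "ft v = ft c")
      case True
      then show ?thesis using assms cur C pr PV vn dr pc
        by (simp add: IW_def CtxB_def WB_def IFEQ_def run_NARROW nar_sem s0_nmem s0_rmem, blast)
    next
      case False
      then show ?thesis using assms cur C pr PV vn dr pc
        by (auto simp: IW_def CtxB_def WB_def IFEQ_def s0_nmem s0_rmem)
    qed
    show "length (pth (nreg (run FF WB s) 4)) < length (pth (nreg s 4))"
      using assms cur C pr PV vn len by (simp add: WB_def IFEQ_def CtxB_def run_NARROW s0_nmem)
  qed
qed


lemma P2_post:
  assumes "IW c suf s" "\<not> nreg s 0 < nreg s 5"
  shows "I2 (run FF P2POST s) \<and> nreg (run FF P2POST s) 2 = Suc c"
proof -
  obtain cur where cur: "nreg s 4 = cur" "cur < nn" using assms by (auto simp: IW_def)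
  have "PARF cur = 0" using assms cur by (simp add: IW_def CtxB_def)
  then have "parf cur = None" using PARF_Some[OF cur(2)] by (cases "parf cur") auto
  then have "pth cur = []" using node_par(1)[OF cur(2)] by simp
  then have suf: "pth c = suf" using assms cur by (simp add: IW_def)
  show ?thesis using assms suf
    by (auto simp: IW_def I2_def CtxB_def P2POST_def ibok_def less_Suc_eq)
qed

definition "K2 = clen P2PRE + ((nn * (clen WB + 2) + 2) + clen P2POST)"

lemma P2B_step:
  assumes "I2 s" "nreg s 2 < nreg s 1"
  shows "ex_run FF P2B s K2 (\<lambda>s'. I2 s' \<and> nn - nreg s' 2 < nn - nreg s 2)"
proof -
  obtain c where c: "nreg s 2 = c" "c < nn" using assms by (auto simp: I2_def CtxB_def)
  let ?s1 = "run FF P2PRE s"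
  have C: "CtxB s" using assms by (simp add: I2_def)
  have I: "IW c [] ?s1" using assms c C unfolding IW_def I2_def P2PRE_def CtxB_def
    by (simp add: s0_nmem isem_def)
  have W: "ex_run FF (WhileN 0 5 WB) ?s1 (length (pth (nreg ?s1 4)) * (clen WB + 2) + 2)
      (\<lambda>s'. (\<exists>suf. IW c suf s') \<and> \<not> nreg s' 0 < nreg s' 5)"
  proof (rule ex_run_while[where \<mu> = "\<lambda>s. length (pth (nreg s 4))" and I = "\<lambda>s. \<exists>suf. IW c suf s"])
    show "\<exists>suf. IW c suf ?s1" using I by blast
    fix s assume "\<exists>suf. IW c suf s" "nreg s 0 < nreg s 5"
    then obtain suf where "IW c suf s" "0 < nreg s 5" by (auto simp: IW_def CtxB_def)
    from WB_step[OF this] show "ex_run FF WB s (clen WB) (\<lambda>s'. (\<exists>suf. IW c suf s') \<and> length (pth (nreg s' 4)) < length (pth (nreg s 4)))"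
      by (intro ex_run_lf WB_lf) blast
  qed
  have W2: "ex_run FF (WhileN 0 5 WB ;; P2POST) ?s1 ((length (pth (nreg ?s1 4)) * (clen WB + 2) + 2) + clen P2POST)
      (\<lambda>s'. I2 s' \<and> nreg s' 2 = Suc c)"
    by (rule ex_run_seq_lf2[OF W]) (auto simp: P2POST_def dest: P2_post)
  have E: "ex_run FF P2B s (clen P2PRE + ((length (pth (nreg ?s1 4)) * (clen WB + 2) + 2) + clen P2POST))
      (\<lambda>s'. I2 s' \<and> nreg s' 2 = Suc c)"
    unfolding P2B_def by (rule ex_run_seq_lf[OF _ W2]) (simp add: P2PRE_def)
  have L: "length (pth (nreg ?s1 4)) \<le> nn"
  proof -
    have "nreg ?s1 4 = c" using C c by (simp add: CtxB_def P2PRE_def)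
    then show ?thesis using pth_len[OF c(2)] c by simp
  qed
  have L2: "length (pth (nreg ?s1 4)) * (clen WB + 2) \<le> nn * (clen WB + 2)" by (rule mult_right_mono[OF L]) simp
  show ?thesis unfolding K2_def
    by (rule ex_run_mono[OF E]) (use L2 c in auto)
qed

lemma PH2_run:
  assumes "I1 s" "nreg s 2 = nn"
  shows "ex_run FF PH2 s (1 + (nn * (K2 + 2) + 2)) (\<lambda>s'. I2 s' \<and> nreg s' 2 = nn)"
proof -
  let ?s1 = "run FF (B (NConst 2 0)) s"
  have I: "I2 ?s1" using assms by (simp add: I1_def I2_def CtxB_def PARF_def DIRF_def)
  have W: "ex_run FF (WhileN 2 1 P2B) ?s1 ((nn - nreg ?s1 2) * (K2 + 2) + 2) (\<lambda>s'. I2 s' \<and> \<not> nreg s' 2 < nreg s' 1)"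
    by (rule ex_run_while[where \<mu> = "\<lambda>s. nn - nreg s 2" and I = I2, OF I]) (rule P2B_step)
  have "ex_run FF PH2 s (clen (B (NConst 2 0)) + ((nn - nreg ?s1 2) * (K2 + 2) + 2)) (\<lambda>s'. I2 s' \<and> \<not> nreg s' 2 < nreg s' 1)"
    unfolding PH2_def using ex_run_seq_lf[OF _ W] by simp
  then show ?thesis by (rule ex_run_mono) (auto simp: I2_def CtxB_def)
qed


lemma cq_append: "cq q (a @ b) v = (cq q a v \<and> cq q b v)"
  by (simp add: cq_def)

lemma IB1_lf: "lf IB1" by (simp add: IB1_def IFEQ_def MG_def)

lemma run_IB1:
  assumes "CtxB s" "nreg s 2 = c" "c < nn"
  shows "nmem (run FF IB1 s) = nmem s" "rmem (run FF IB1 s) = rmem s" "pc (run FF IB1 s) = pc s"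
    "nreg (run FF IB1 s) 7 = ft c"
    "r \<notin> {7, 13, 14, 8, 9} \<Longrightarrow> nreg (run FF IB1 s) r = nreg s r"
    "r \<notin> {6, 7, 9} \<Longrightarrow> rreg (run FF IB1 s) r = rreg s r"
  using assms by (auto simp: IB1_def IFEQ_def run_MG CtxB_def s0_nmem)

lemma run_IB1_sem:
  assumes "CtxB s" "nreg s 2 = c" "c < nn"
    and "ibok c (nmem s 9 c) (rmem s 2 c) (nmem s 10 c) (rmem s 3 c)"
    and "nmem s 11 (ft c) = nreg s 11 \<Longrightarrow> \<forall>v. isem (nmem s 12 (ft c)) (rmem s 4 (ft c)) (nmem s 13 (ft c)) (rmem s 5 (ft c)) v = cq (ft c) pfx v"
    and "nmem s 11 (ft c) \<noteq> nreg s 11 \<Longrightarrow> \<forall>v. cq (ft c) pfx v"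
  shows "isem (nreg (run FF IB1 s) 13) (rreg (run FF IB1 s) 6) (nreg (run FF IB1 s) 14) (rreg (run FF IB1 s) 7) v =
     cq (ft c) (pfx @ pth c) v"
proof (cases "nmem s 11 (ft c) = nreg s 11")
  case True
  then show ?thesis using assms by (simp add: IB1_def IFEQ_def run_MG CtxB_def s0_nmem ibok_def cq_append, blast)
next
  case False
  then show ?thesis using assms by (auto simp: IB1_def IFEQ_def CtxB_def s0_nmem ibok_def cq_append)
qed



lemma IB2A_lf: "lf IB2A" by (simp add: IB2A_def PRQ_def)
lemma IB2B_lf: "lf IB2B" by (simp add: IB2B_def PARB_def PRQ_def NARROW_def ROOTB_def)
lemma IB2C_lf: "lf IB2C" by (simp add: IB2C_def ACCB_def IFEQ_def)

lemma run_IB2A: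
  assumes "nreg u 0 = 0" "nreg u 2 = c"
  shows "nmem (run FF IB2A u) = (nmem u)(14 := (nmem u 14)(c := nreg u 13), 15 := (nmem u 15)(c := nreg u 14))"
    "rmem (run FF IB2A u) = (rmem u)(6 := (rmem u 6)(c := rreg u 6), 7 := (rmem u 7)(c := rreg u 7),
        8 := (rmem u 8)(c := prqmach FF (nmem u 6 (nreg u 7)) (rmem u 1 (nreg u 7)) (nreg u 7) (nreg u 13) (rreg u 6) (nreg u 14) (rreg u 7)))"
    "nreg (run FF IB2A u) 5 = nmem u 7 c"
    "r \<notin> {9, 5} \<Longrightarrow> nreg (run FF IB2A u) r = nreg u r"
    "r \<notin> {9, 12, 13, 14, 15} \<Longrightarrow> rreg (run FF IB2A u) r = rreg u r"
  using assms by (simp_all add: IB2A_def run_PRQ)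

lemma run_IB2B:
  assumes "nreg X 0 = 0" "rreg X 11 = 0" "nreg X 10 = 1"
  shows "nmem (run FF IB2B X) = nmem X" "rmem (run FF IB2B X) = rmem X"
    "rreg (run FF IB2B X) 19 = (if 0 < nreg X 5 then
        (if rmem X 8 (nreg X 5 - 1) = 0 then 0 else rmem X 9 (nreg X 5 - 1) *
          prqmach FF (nmem X 6 (nmem X 2 (nreg X 5 - 1))) (rmem X 1 (nmem X 2 (nreg X 5 - 1))) (nmem X 2 (nreg X 5 - 1))
            (nHL (nmem X 14 (nreg X 5 - 1)) (nmem X 8 (nreg X 2)))
            (nLO (nmem X 14 (nreg X 5 - 1)) (rmem X 6 (nreg X 5 - 1)) (rmem X 0 (nreg X 5 - 1)) (nmem X 8 (nreg X 2)))
            (nHH (nmem X 15 (nreg X 5 - 1)) (nmem X 8 (nreg X 2)))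
            (nHI (nmem X 15 (nreg X 5 - 1)) (rmem X 7 (nreg X 5 - 1)) (rmem X 0 (nreg X 5 - 1)) (nmem X 8 (nreg X 2)))
          / rmem X 8 (nreg X 5 - 1))
       else rreg X 5)"
    "rreg (run FF IB2B X) 20 = (if 0 < nreg X 5 then
        (if (rmem X 1 (nmem X 2 (nreg X 5 - 1)) < rmem X 0 (nreg X 5 - 1)) = (0 < nmem X 8 (nreg X 2))
         then rmem X 10 (nreg X 5 - 1) else 0) else 1)"
  using assms by (simp_all add: IB2B_def run_PARB ROOTB_def)

lemma run_IB2C:
  assumes "nreg Y 0 = 0" "nreg Y 10 = 1" "nreg Y 2 = c"
  shows "nmem (run FF IB2C Y) = nmem Y"
    "rmem (run FF IB2C Y) = (rmem Y)(9 := (rmem Y 9)(c := rreg Y 19), 10 := (rmem Y 10)(c := rreg Y 20),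
       11 := (if nmem Y 1 c = 0 \<and> nreg Y 3 = 0 then (rmem Y 11)(c := rreg Y 19) else rmem Y 11))"
    "rreg (run FF IB2C Y) 1 = rreg Y 1 + (if nmem Y 1 c = 0 then rmem Y 0 c * rreg Y 19 else 0)"
    "rreg (run FF IB2C Y) 4 = rreg Y 4 + (if nmem Y 1 c = 0 \<and> nreg Y 3 = 0 then rmem Y 0 c * rreg Y 20 else 0)"
    "nreg (run FF IB2C Y) 2 = Suc c"
  using assms by (auto simp: IB2C_def ACCB_def IFEQ_def fun_eq_iff)


lemma prqmach_eq: "q \<in> {1..d} \<Longrightarrow> prqmach FF (nmem s0 6 q) (rmem s0 (Suc 0) q) q hl lo hh hi = prqm q hl lo hh hi"
  by (simp add: prqmach_def prqm_def s0_nmem s0_rmem)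

definition Ctx3 :: "mstate \<Rightarrow> bool" where
  "Ctx3 s \<longleftrightarrow> CtxB s \<and> nmem s 7 = PARF \<and> nmem s 8 = DIRF \<and>
     (\<forall>c<nn. ibok c (nmem s 9 c) (rmem s 2 c) (nmem s 10 c) (rmem s 3 c))"

definition Gvalid :: "nat \<Rightarrow> cons list \<Rightarrow> mstate \<Rightarrow> bool" where
  "Gvalid k pfx s \<longleftrightarrow> (\<forall>q\<in>{1..d}. (nmem s 11 q = Suc k \<longrightarrow>
        (\<forall>v. isem (nmem s 12 q) (rmem s 4 q) (nmem s 13 q) (rmem s 5 q) v = cq q pfx v)) \<and>
      (nmem s 11 q \<noteq> Suc k \<longrightarrow> (\<forall>v. cq q pfx v)))"

definition OIP :: "nat \<Rightarrow> cons list \<Rightarrow> mstate \<Rightarrow> bool" where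
  "OIP k pfx s \<longleftrightarrow> Ctx3 s \<and> nreg s 3 = k \<and> nreg s 11 = Suc k \<and> Gvalid k pfx s \<and> rreg s 5 = Pr pfx \<and>
     set (map fst pfx) \<subseteq> {1..d} \<and> (k = 0 \<longrightarrow> pfx = [])"

definition IL :: "nat \<Rightarrow> cons list \<Rightarrow> mstate \<Rightarrow> mstate \<Rightarrow> bool" where
  "IL k pfx s1 s \<longleftrightarrow> OIP k pfx s \<and> FR ONEITER s1 s \<and> nreg s 2 \<le> nn \<and>
     (\<forall>c<nreg s 2. kd c = 1 \<longrightarrow> (\<forall>v. isem (nmem s 14 c) (rmem s 6 c) (nmem s 15 c) (rmem s 7 c) v = cq (ft c) (pfx @ pth c) v) \<and>
        rmem s 8 c = prq (ft c) (pfx @ pth c)) \<and>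
     (\<forall>c<nreg s 2. rmem s 9 c = Pr (pfx @ pth c) \<and> rmem s 10 c = chi (ind (pth c) x)) \<and>
     rreg s 1 = (\<Sum>m<nreg s 2. w m * Pr (pfx @ pth m)) \<and>
     (k = 0 \<longrightarrow> (\<forall>c<nreg s 2. kd c = 0 \<longrightarrow> rmem s 11 c = Pr (pth c)) \<and>
        rreg s 4 = rreg s1 4 + (\<Sum>m<nreg s 2. w m * chi (ind (pth m) x))) \<and>
     (k \<noteq> 0 \<longrightarrow> rmem s 11 = rmem s1 11 \<and> rreg s 4 = rreg s1 4)"

lemma FR_IB_ONE: "FR ONEITER s1 s \<Longrightarrow> FR IB s s' \<Longrightarrow> FR ONEITER s1 s'"
  unfolding FR_def using frm_trans[of "cw wn ONEITER" "cw wr ONEITER" "cw wnb ONEITER" "cw wrb ONEITER" s1 s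
      "cw wn IB" "cw wr IB" "cw wnb IB" "cw wrb IB" s']
  by (simp add: ONEITER_def Un_assoc)

lemma frm_nreg: "frm NR RR NB RB s s' \<Longrightarrow> r \<notin> NR \<Longrightarrow> nreg s' r = nreg s r" by (simp add: frm_def)
lemma frm_rreg: "frm NR RR NB RB s s' \<Longrightarrow> r \<notin> RR \<Longrightarrow> rreg s' r = rreg s r" by (simp add: frm_def)

lemma IB2B_frame:
  "r \<notin> {12, 7, 13, 14, 17, 9} \<Longrightarrow> nreg (run FF IB2B X) r = nreg X r"
  "r \<notin> {6, 7, 8, 9, 12, 13, 14, 15, 17, 18, 19, 20} \<Longrightarrow> rreg (run FF IB2B X) r = rreg X r"
proof -
  have "FR IB2B X (run FF IB2B X)" by (rule run_frm[OF IB2B_lf])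
  then have f: "frm {12, 7, 13, 14, 17, 9} {6, 7, 8, 9, 12, 13, 14, 15, 17, 18, 19, 20} {} {} X (run FF IB2B X)"
    unfolding FR_def by (rule frm_mono) (auto simp: IB2B_def PARB_def PRQ_def NARROW_def ROOTB_def)
  show "r \<notin> {12, 7, 13, 14, 17, 9} \<Longrightarrow> nreg (run FF IB2B X) r = nreg X r" by (rule frm_nreg[OF f])
  show "r \<notin> {6, 7, 8, 9, 12, 13, 14, 15, 17, 18, 19, 20} \<Longrightarrow> rreg (run FF IB2B X) r = rreg X r" by (rule frm_rreg[OF f])
qed


lemma IB2C_frame:
  "r \<notin> {8, 2} \<Longrightarrow> nreg (run FF IB2C Y) r = nreg Y r"
  "r \<notin> {8, 9, 1, 4} \<Longrightarrow> rreg (run FF IB2C Y) r = rreg Y r"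
proof -
  have "FR IB2C Y (run FF IB2C Y)" by (rule run_frm[OF IB2C_lf])
  then have f: "frm {8, 2} {8, 9, 1, 4} {} {9, 10, 11} Y (run FF IB2C Y)"
    unfolding FR_def by (rule frm_mono) (auto simp: IB2C_def ACCB_def IFEQ_def)
  show "r \<notin> {8, 2} \<Longrightarrow> nreg (run FF IB2C Y) r = nreg Y r" by (rule frm_nreg[OF f])
  show "r \<notin> {8, 9, 1, 4} \<Longrightarrow> rreg (run FF IB2C Y) r = rreg Y r" by (rule frm_rreg[OF f])
qed

lemma IB_lf: "lf IB" by (simp add: IB_def IB2_def IB1_lf IB2A_lf IB2B_lf IB2C_lf)

lemma IB_step:
  assumes IL: "IL k pfx s1 s" and lt: "nreg s 2 < nreg s 1"
  shows "IL k pfx s1 (run FF IB s) \<and> nn - nreg (run FF IB s) 2 < nn - nreg s 2"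
proof -
  have O: "OIP k pfx s" using IL by (simp add: IL_def)
  have C3: "Ctx3 s" using O by (simp add: OIP_def)
  have CB: "CtxB s" using C3 by (simp add: Ctx3_def)
  obtain c where c: "nreg s 2 = c" "c < nn" using lt CB by (auto simp: CtxB_def)
  define u where "u = run FF IB1 s"
  define X where "X = run FF IB2A u"
  define Y where "Y = run FF IB2B X"
  define s' where "s' = run FF IB2C Y"
  have run: "run FF IB s = s'" by (simp add: IB_def IB2_def u_def X_def Y_def s'_def)
  note U = run_IB1[OF CB c, folded u_def]
  have u0: "nreg u 0 = 0" "nreg u 2 = c" "nreg u 10 = 1" "rreg u 11 = 0" "nreg u 3 = k"
    using U(5)[of 0] U(5)[of 2] U(5)[of 10] U(6)[of 11] U(5)[of 3] CB c O by (auto simp: CtxB_def OIP_def)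
  note XX = run_IB2A[OF u0(1,2), folded X_def]
  have X0: "nreg X 0 = 0" "rreg X 11 = 0" "nreg X 10 = 1" "nreg X 2 = c" "nreg X 3 = k"
    using XX(4)[of 0] XX(5)[of 11] XX(4)[of 10] XX(4)[of 2] XX(4)[of 3] u0 by auto
  note YY = run_IB2B[OF X0(1-3), folded Y_def]
  have Y0: "nreg Y 0 = 0" "nreg Y 10 = 1" "nreg Y 2 = c" "nreg Y 3 = k"
    using IB2B_frame(1)[of 0 X] IB2B_frame(1)[of 10 X] IB2B_frame(1)[of 2 X] IB2B_frame(1)[of 3 X] X0
    by (auto simp: Y_def)
  note SS = run_IB2C[OF Y0(1-3), folded s'_def]
  have fr0: "FR IB s s'" using run_frm[OF IB_lf, of s FF] run by simp
  have fr: "frm {2,5,7,8,9,12,13,14,17} {1,4,6,7,8,9,12,13,14,15,17,18,19,20} {14,15} {6,7,8,9,10,11} s s'"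
    using fr0 unfolding FR_def
    by (rule frm_mono) (auto simp: IB_def IB2_def IB1_def IB2A_def IB2B_def IB2C_def MG_def PRQ_def PARB_def NARROW_def ROOTB_def ACCB_def IFEQ_def)
  have nr: "\<And>r. r \<notin> {2,5,7,8,9,12,13,14,17} \<Longrightarrow> nreg s' r = nreg s r" using fr by (simp add: frm_def)
  have rr: "\<And>r. r \<notin> {1,4,6,7,8,9,12,13,14,15,17,18,19,20} \<Longrightarrow> rreg s' r = rreg s r" using fr by (simp add: frm_def)
  define P' where "P' = rreg Y 19"
  define I' where "I' = rreg Y 20"
  define PO where "PO = prqmach FF (nmem s 6 (ft c)) (rmem s 1 (ft c)) (ft c) (nreg u 13) (rreg u 6) (nreg u 14) (rreg u 7)"
  have kdc: "nmem s 1 c = kd c" using CB c by (simp add: CtxB_def s0_nmem)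
  have nm: "nmem s' = (nmem s)(14 := (nmem s 14)(c := nreg u 13), 15 := (nmem s 15)(c := nreg u 14))"
    using SS(1) YY(1) XX(1) U(1) by simp
  have rm: "rmem s' = (rmem s)(6 := (rmem s 6)(c := rreg u 6), 7 := (rmem s 7)(c := rreg u 7), 8 := (rmem s 8)(c := PO),
      9 := (rmem s 9)(c := P'), 10 := (rmem s 10)(c := I'), 11 := (if kd c = 0 \<and> k = 0 then (rmem s 11)(c := P') else rmem s 11))"
    using SS(2) YY(1,2) XX(1,2) U(1,2,4) Y0 kdc unfolding P'_def I'_def PO_def by (simp add: fun_eq_iff)
  have Gv: "Gvalid k pfx s" and pb: "rreg s 5 = Pr pfx" and pf: "set (map fst pfx) \<subseteq> {1..d}"
    and k0: "k = 0 \<Longrightarrow> pfx = []" and stk: "nreg s 11 = Suc k"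
    using O by (auto simp: OIP_def)
  have F1: "\<forall>v. isem (nreg u 13) (rreg u 6) (nreg u 14) (rreg u 7) v = cq (ft c) (pfx @ pth c) v" if kc: "kd c = 1"
  proof
    fix v
    have fq: "ft c \<in> {1..d}" using node_feats(2)[OF c(2) kc] .
    have ib: "ibok c (nmem s 9 c) (rmem s 2 c) (nmem s 10 c) (rmem s 3 c)" using C3 c by (simp add: Ctx3_def)
    show "isem (nreg u 13) (rreg u 6) (nreg u 14) (rreg u 7) v = cq (ft c) (pfx @ pth c) v"
      unfolding u_def
      by (rule run_IB1_sem[OF CB c ib]) (use Gv fq stk in \<open>auto simp: Gvalid_def\<close>)
  qed
  have F2: "PO = prq (ft c) (pfx @ pth c)" if kc: "kd c = 1"
  proof -
    have fq: "ft c \<in> {1..d}" using node_feats(2)[OF c(2) kc] .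
    have "PO = prqm (ft c) (nreg u 13) (rreg u 6) (nreg u 14) (rreg u 7)"
      using CB fq prqmach_eq by (simp add: PO_def CtxB_def)
    also have "\<dots> = prq (ft c) (pfx @ pth c)" by (rule prqm_correct) (use F1[OF kc] in blast)
    finally show ?thesis .
  qed
  have X5: "nreg X 5 = PARF c" using XX(3) U(1) C3 by (simp add: Ctx3_def)
  have F34: "P' = Pr (pfx @ pth c) \<and> I' = chi (ind (pth c) x)"
  proof (cases "parf c")
    case None
    then have "PARF c = 0" "pth c = []" using PARF_None[OF c(2)] node_par(1)[OF c(2)] by auto
    moreover have "rreg X 5 = rreg s 5" using XX(5)[of 5] U(6)[of 5] by simp
    ultimately show ?thesis using X5 pb unfolding P'_def I'_def YY(3,4) by (simp add: chi_def)
  next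
    case (Some v)
    note NP = node_par(2)[OF c(2) Some]
    have PV: "PARF c = Suc v" using PARF_Some[OF c(2) Some] .
    have vc: "v < c" "kd v = 1" and pc: "pth c = pth v @ [(ft v, vl v, dirf c)]" using NP by auto
    have vn: "v < nn" using vc c by simp
    have fv: "ft v \<in> {1..d}" using node_feats(2)[OF vn vc(2)] .
    have ILv: "(\<forall>y. isem (nmem s 14 v) (rmem s 6 v) (nmem s 15 v) (rmem s 7 v) y = cq (ft v) (pfx @ pth v) y) \<and>
        rmem s 8 v = prq (ft v) (pfx @ pth v)" "rmem s 9 v = Pr (pfx @ pth v)" "rmem s 10 v = chi (ind (pth v) x)"
      using IL vc c by (auto simp: IL_def)
    have dr: "(0 < DIRF c) = dirf c" using DIRF_Some[OF c(2) Some] .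
    have bX: "nmem X 2 v = ft v" "nmem X 6 = nmem s0 6" "rmem X 1 = rmem s0 1" "nmem X 14 v = nmem s 14 v"
       "nmem X 15 v = nmem s 15 v" "rmem X 6 v = rmem s 6 v" "rmem X 7 v = rmem s 7 v" "rmem X 0 v = vl v"
       "nmem X 8 (nreg X 2) = DIRF c" "rmem X 8 v = rmem s 8 v" "rmem X 9 v = rmem s 9 v" "rmem X 10 v = rmem s 10 v"
      using XX(1,2) U(1,2) CB C3 vc vn X0 by (auto simp: CtxB_def Ctx3_def s0_nmem s0_rmem)
    let ?cs = "pfx @ pth v"
    let ?c2 = "(ft v, vl v, dirf c)"
    have pres: "prqmach FF (nmem s0 6 (ft v)) (rmem s0 (Suc 0) (ft v)) (ft v)
            (nHL (nmem s 14 v) (DIRF c)) (nLO (nmem s 14 v) (rmem s 6 v) (vl v) (DIRF c))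
            (nHH (nmem s 15 v) (DIRF c)) (nHI (nmem s 15 v) (rmem s 7 v) (vl v) (DIRF c)) = prq (ft v) (?cs @ [?c2])"
      unfolding prqmach_eq[OF fv]
      by (rule prqm_correct) (use ILv(1) dr in \<open>simp add: nar_sem cq_append\<close>)
    have feat: "set (map fst ?cs) \<subseteq> {1..d}" using pf node_feats(1)[OF vn] by auto
    have "P' = (if prq (ft v) ?cs = 0 then 0 else Pr ?cs * prq (ft v) (?cs @ [?c2]) / prq (ft v) ?cs)"
      unfolding P'_def YY(3) X5 PV using bX pres ILv by simp
    also have "\<dots> = Pr (?cs @ [?c2])" using Pr_app[OF feat fv] by simp
    finally have P1: "P' = Pr (pfx @ pth c)" using pc by simp
    have x1: "rmem s0 (Suc 0) (ft v) = x (ft v)" using s0_rmem(2)[OF fv] by simp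
    have "I' = (if (x (ft v) < vl v) = dirf c then chi (ind (pth v) x) else 0)"
      unfolding I'_def YY(4) X5 PV using bX ILv dr x1 by simp
    also have "\<dots> = chi (ind (pth c) x)" using pc by (simp add: chi_def ind_append ind_def)
    finally show ?thesis using P1 by simp
  qed
  have Yr: "rreg Y 1 = rreg s 1" "rreg Y 4 = rreg s 4"
    using IB2B_frame(2)[of 1 X] IB2B_frame(2)[of 4 X] XX(5)[of 1] XX(5)[of 4] U(6)[of 1] U(6)[of 4] by (auto simp: Y_def)
  have Yb: "nmem Y 1 c = kd c" "rmem Y 0 c = vl c"
    using YY(1,2) XX(1,2) U(1,2) kdc CB c by (auto simp: CtxB_def s0_rmem)
  have wc: "(if kd c = 0 then vl c * P' else 0) = w c * P'" using kd_cases[of c] w_leaf w_internal by auto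
  have F5: "rreg s' 1 = rreg s 1 + w c * Pr (pfx @ pth c)"
    using SS(3) Yr Yb F34 w_leaf[of c] w_internal[of c] kd_cases[of c] by (auto simp: P'_def[symmetric])
  have F6: "rreg s' 4 = rreg s 4 + (if k = 0 then w c * chi (ind (pth c) x) else 0)"
  proof -
    have "rreg s' 4 = rreg s 4 + (if kd c = 0 \<and> k = 0 then vl c * I' else 0)" using SS(4) Yr Yb Y0 by (simp add: I'_def[symmetric])
    then show ?thesis using kd_cases[of c] w_leaf w_internal F34 by auto
  qed
  have sc: "nreg s' 2 = Suc c" using SS(5) .
  have O': "OIP k pfx s'"
    using O unfolding OIP_def Ctx3_def CtxB_def Gvalid_def by (simp add: nm rm nr rr, blast)
  have FR': "FR ONEITER s1 s'" using FR_IB_ONE[OF _ fr0] IL by (simp add: IL_def)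
  have A1: "\<forall>c'<nreg s' 2. kd c' = 1 \<longrightarrow> (\<forall>v. isem (nmem s' 14 c') (rmem s' 6 c') (nmem s' 15 c') (rmem s' 7 c') v = cq (ft c') (pfx @ pth c') v) \<and>
        rmem s' 8 c' = prq (ft c') (pfx @ pth c')"
  proof (intro allI impI)
    fix c' assume a: "c' < nreg s' 2" "kd c' = 1"
    show "(\<forall>v. isem (nmem s' 14 c') (rmem s' 6 c') (nmem s' 15 c') (rmem s' 7 c') v = cq (ft c') (pfx @ pth c') v) \<and>
        rmem s' 8 c' = prq (ft c') (pfx @ pth c')"
    proof (cases "c' = c")
      case True
      then show ?thesis using F1 F2 a by (simp add: nm rm)
    next
      case False
      then have "c' < c" using a sc by simp
      then show ?thesis using IL a c False by (simp add: nm rm IL_def)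
    qed
  qed
  have A2: "\<forall>c'<nreg s' 2. rmem s' 9 c' = Pr (pfx @ pth c') \<and> rmem s' 10 c' = chi (ind (pth c') x)"
    using IL c sc F34 by (auto simp: nm rm IL_def less_Suc_eq)
  have A3: "rreg s' 1 = (\<Sum>m<nreg s' 2. w m * Pr (pfx @ pth m))"
    using IL c sc F5 by (simp add: IL_def)
  have A4: "k = 0 \<longrightarrow> (\<forall>c'<nreg s' 2. kd c' = 0 \<longrightarrow> rmem s' 11 c' = Pr (pth c')) \<and>
        rreg s' 4 = rreg s1 4 + (\<Sum>m<nreg s' 2. w m * chi (ind (pth m) x))"
    using IL c sc F6 F34 k0 by (auto simp: IL_def rm less_Suc_eq)
  have A5: "k \<noteq> 0 \<longrightarrow> rmem s' 11 = rmem s1 11 \<and> rreg s' 4 = rreg s1 4"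
    using IL F6 by (auto simp: IL_def rm)
  have "IL k pfx s1 s'" unfolding IL_def using O' FR' A1 A2 A3 A4 A5 sc c by simp
  then show ?thesis using run sc c by simp
qed


lemma OPRE_lf: "lf OPRE" by (simp add: OPRE_def)

definition "KIB = clen OPRE + (nn * (clen IB + 2) + 2)"

lemma ONEITER_run:
  assumes "OIP k pfx s"
  shows "ex_run FF ONEITER s KIB (\<lambda>s'. IL k pfx s s' \<and> nreg s' 2 = nn)"
proof -
  let ?s1 = "run FF OPRE s"
  have fr: "FR OPRE s ?s1" by (rule run_frm[OF OPRE_lf])
  have fr1: "FR ONEITER s ?s1" using fr unfolding FR_def by (rule frm_mono) (auto simp: ONEITER_def)
  have I: "IL k pfx s ?s1" using assms fr1
    unfolding IL_def OIP_def Ctx3_def CtxB_def Gvalid_def by (simp add: OPRE_def, blast)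
  have W: "ex_run FF (WhileN 2 1 IB) ?s1 ((nn - nreg ?s1 2) * (clen IB + 2) + 2) (\<lambda>s'. IL k pfx s s' \<and> \<not> nreg s' 2 < nreg s' 1)"
  proof (rule ex_run_while[where \<mu> = "\<lambda>s. nn - nreg s 2" and I = "IL k pfx s", OF I])
    fix s' assume "IL k pfx s s'" "nreg s' 2 < nreg s' 1"
    from IB_step[OF this] show "ex_run FF IB s' (clen IB) (\<lambda>s''. IL k pfx s s'' \<and> nn - nreg s'' 2 < nn - nreg s' 2)"
      by (intro ex_run_lf IB_lf) auto
  qed
  have E: "ex_run FF ONEITER s (clen OPRE + ((nn - nreg ?s1 2) * (clen IB + 2) + 2)) (\<lambda>s'. IL k pfx s s' \<and> \<not> nreg s' 2 < nreg s' 1)"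
    unfolding ONEITER_def by (rule ex_run_seq_lf[OF OPRE_lf W])
  have z: "nreg ?s1 2 = 0" by (simp add: OPRE_def)
  show ?thesis unfolding KIB_def
    by (rule ex_run_mono[OF E]) (use z in \<open>auto simp: IL_def OIP_def Ctx3_def CtxB_def\<close>)
qed


lemma GB_lf: "lf GB" by (simp add: GB_def IFEQ_def NARROW_def)

lemma run_GB:
  assumes a: "nreg s 0 = 0" "rreg s 11 = 0" "nreg s 10 = 1"
  defines "v \<equiv> nreg s 5 - 1"
  defines "q \<equiv> nmem s 2 v"
  defines "stp \<equiv> (nmem s 11 q = nreg s 11)"
  defines "dr \<equiv> nmem s 8 (nreg s 4)"
  defines "t \<equiv> rmem s 0 v"
  defines "h0 \<equiv> (if stp then nmem s 12 q else 0)"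
  defines "hh0 \<equiv> (if stp then nmem s 13 q else 0)"
  shows "nmem (run FF GB s) = (nmem s)(11 := (nmem s 11)(q := nreg s 11), 12 := (nmem s 12)(q := nHL h0 dr),
            13 := (nmem s 13)(q := nHH hh0 dr))"
    "rmem (run FF GB s) = (rmem s)(4 := (rmem s 4)(q := nLO h0 (rmem s 4 q) t dr), 5 := (rmem s 5)(q := nHI hh0 (rmem s 5 q) t dr))"
    "nreg (run FF GB s) 4 = v" "nreg (run FF GB s) 5 = nmem s 7 v"
proof -
  show "nmem (run FF GB s) = (nmem s)(11 := (nmem s 11)(q := nreg s 11), 12 := (nmem s 12)(q := nHL h0 dr),
            13 := (nmem s 13)(q := nHH hh0 dr))"
    unfolding v_def q_def stp_def dr_def t_def h0_def hh0_def
    using a by (cases "nmem s 11 (nmem s 2 (nreg s 5 - 1)) = nreg s 11") (auto simp: GB_def IFEQ_def run_NARROW fun_eq_iff)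
  show "rmem (run FF GB s) = (rmem s)(4 := (rmem s 4)(q := nLO h0 (rmem s 4 q) t dr), 5 := (rmem s 5)(q := nHI hh0 (rmem s 5 q) t dr))"
    unfolding v_def q_def stp_def dr_def t_def h0_def hh0_def
    using a by (cases "nmem s 11 (nmem s 2 (nreg s 5 - 1)) = nreg s 11") (auto simp: GB_def IFEQ_def run_NARROW fun_eq_iff)
  show "nreg (run FF GB s) 4 = v" "nreg (run FF GB s) 5 = nmem s 7 v"
    unfolding v_def using a by (auto simp: GB_def IFEQ_def run_NARROW)
qed


definition IG :: "nat \<Rightarrow> nat \<Rightarrow> mstate \<Rightarrow> cons list \<Rightarrow> mstate \<Rightarrow> bool" where
  "IG k l sA suf s \<longleftrightarrow> Ctx3 s \<and> FR (WhileN 0 5 GB) sA s \<and> nreg s 3 = k \<and> nreg s 11 = Suc k \<and>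
     nreg s 4 < nn \<and> nreg s 5 = PARF (nreg s 4) \<and> pth l = pth (nreg s 4) @ suf \<and>
     (\<forall>q. nmem s 11 q \<le> Suc k) \<and> Gvalid k suf s"

lemma isem_zero: "isem 0 lo 0 hi v" by (simp add: isem_def)

lemma GB_step:
  assumes IG: "IG k l sA suf s" and pos: "0 < nreg s 5"
  shows "\<exists>suf'. IG k l sA suf' (run FF GB s) \<and> length (pth (nreg (run FF GB s) 4)) < length (pth (nreg s 4))"
proof -
  have C3: "Ctx3 s" and CB: "CtxB s" using IG by (auto simp: IG_def Ctx3_def)
  obtain cur where cur: "nreg s 4 = cur" "cur < nn" using IG by (auto simp: IG_def)
  have pr: "nreg s 5 = PARF cur" using IG cur by (simp add: IG_def)
  obtain v where pv: "parf cur = Some v" using PARF_pos[OF cur(2)] pos pr by auto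
  then have PV: "PARF cur = Suc v" using PARF_Some[OF cur(2)] by simp
  have nv: "v < cur" "kd v = 1" "pth cur = pth v @ [(ft v, vl v, dirf cur)]" using node_par(2)[OF cur(2) pv] by auto
  have vn: "v < nn" using nv cur by simp
  have fv: "ft v \<in> {1..d}" using node_feats(2)[OF vn nv(2)] .
  have dr: "(0 < DIRF cur) = dirf cur" using DIRF_Some[OF cur(2) pv] .
  define s' where "s' = run FF GB s"
  define q where "q = ft v"
  define stp where "stp = (nmem s 11 q = Suc k)"
  define h0 where "h0 = (if stp then nmem s 12 q else 0)"
  define hh0 where "hh0 = (if stp then nmem s 13 q else 0)"
  have a: "nreg s 0 = 0" "rreg s 11 = 0" "nreg s 10 = 1" using CB by (auto simp: CtxB_def)
  have k1: "nreg s 11 = Suc k" using IG by (simp add: IG_def)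
  have b2: "nmem s 2 v = ft v" "nmem s 8 cur = DIRF cur" "rmem s 0 v = vl v" "nmem s 7 v = PARF v"
    using CB C3 vn cur by (auto simp: CtxB_def Ctx3_def s0_nmem s0_rmem)
  note R = run_GB[OF a, folded s'_def]
  have nm: "nmem s' = (nmem s)(11 := (nmem s 11)(q := Suc k), 12 := (nmem s 12)(q := nHL h0 (DIRF cur)),
            13 := (nmem s 13)(q := nHH hh0 (DIRF cur)))"
    using R(1) pr PV b2 cur k1 unfolding q_def h0_def hh0_def stp_def by simp
  have rm: "rmem s' = (rmem s)(4 := (rmem s 4)(q := nLO h0 (rmem s 4 q) (vl v) (DIRF cur)),
       5 := (rmem s 5)(q := nHI hh0 (rmem s 5 q) (vl v) (DIRF cur)))"
    using R(2) pr PV b2 cur k1 unfolding q_def h0_def hh0_def stp_def by simp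
  have n45: "nreg s' 4 = v" "nreg s' 5 = PARF v" using R(3,4) pr PV b2 by simp_all
  have fr0: "FR GB s s'" unfolding s'_def by (rule run_frm[OF GB_lf])
  have fr: "frm {6,7,8,13,14,17,4,5} {6,7,8} {11,12,13} {4,5} s s'"
    using fr0 unfolding FR_def by (rule frm_mono) (auto simp: GB_def IFEQ_def NARROW_def)
  have nr: "\<And>r. r \<notin> {6,7,8,13,14,17,4,5} \<Longrightarrow> nreg s' r = nreg s r" using fr by (simp add: frm_def)
  have rr: "\<And>r. r \<notin> {6,7,8} \<Longrightarrow> rreg s' r = rreg s r" using fr by (simp add: frm_def)
  have FR': "FR (WhileN 0 5 GB) sA s'"
    using IG fr0 frm_trans unfolding IG_def FR_def by fastforce
  let ?suf' = "(ft v, vl v, dirf cur) # suf"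
  have Gv: "Gvalid k suf s" using IG by (simp add: IG_def)
  have Gv': "Gvalid k ?suf' s'"
    unfolding Gvalid_def
  proof
    fix q' assume q': "q' \<in> {1..d}"
    show "(nmem s' 11 q' = Suc k \<longrightarrow> (\<forall>y. isem (nmem s' 12 q') (rmem s' 4 q') (nmem s' 13 q') (rmem s' 5 q') y = cq q' ?suf' y)) \<and>
          (nmem s' 11 q' \<noteq> Suc k \<longrightarrow> (\<forall>y. cq q' ?suf' y))"
    proof (cases "q' = q")
      case True
      have base: "isem h0 (rmem s 4 q) hh0 (rmem s 5 q) y = cq q suf y" for y
      proof (cases stp)
        case True
        then show ?thesis using Gv fv unfolding Gvalid_def h0_def hh0_def stp_def q_def by auto
      next
        case False
        then show ?thesis using Gv fv unfolding Gvalid_def h0_def hh0_def stp_def q_def by (auto simp: isem_def)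
      qed
      show ?thesis using True base dr by (auto simp: nm rm nar_sem q_def)
    next
      case False
      then have "ft v \<noteq> q'" by (simp add: q_def)
      then show ?thesis using Gv q' False unfolding Gvalid_def by (simp add: nm rm)
    qed
  qed
  have IG': "IG k l sA ?suf' s'"
    unfolding IG_def using IG C3 FR' Gv' n45 nv vn cur
    by (auto simp: IG_def Ctx3_def CtxB_def nm rm nr rr)
  show ?thesis using IG' n45 nv cur unfolding s'_def by auto
qed


lemma FR_GBW: "FR (WhileN 0 5 GB) s s' \<Longrightarrow> frm {6,7,8,13,14,17,4,5} {6,7,8} {11,12,13} {4,5} s s'"
  unfolding FR_def by (rule frm_mono) (auto simp: GB_def IFEQ_def NARROW_def)

lemma FR_ONE: "FR ONEITER s s' \<Longrightarrow> frm {2,5,7,8,9,12,13,14,17} {1,4,6,7,8,9,12,13,14,15,17,18,19,20} {14,15} {6,7,8,9,10,11} s s'"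
  unfolding FR_def by (rule frm_mono)
    (auto simp: ONEITER_def OPRE_def IB_def IB2_def IB1_def IB2A_def IB2B_def IB2C_def MG_def PRQ_def PARB_def NARROW_def ROOTB_def ACCB_def IFEQ_def)

definition PVok :: "mstate \<Rightarrow> bool" where
  "PVok s \<longleftrightarrow> (\<forall>c<nn. kd c = 0 \<longrightarrow> rmem s 11 c = Pr (pth c)) \<and> rreg s 3 = A0 \<and> rreg s 4 = FX0"

definition QSv :: "nat \<Rightarrow> real" where
  "QSv j = (\<Sum>l<j. w l * (\<Sum>m<nn. w m * Pr (pth l @ pth m)))"

definition Mid :: "nat \<Rightarrow> mstate \<Rightarrow> bool" where
  "Mid k s \<longleftrightarrow> Ctx3 s \<and> nreg s 3 = k \<and> (\<forall>q. nmem s 11 q \<le> Suc k) \<and> PVok s \<and> rreg s 2 = QSv k"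

definition "KLF = clen LPRE + ((nn * (clen GB + 2) + 2) + (KIB + clen LPOST))"

lemma LPRE_lf: "lf LPRE" by (simp add: LPRE_def)
lemma LPOST_lf: "lf LPOST" by (simp add: LPOST_def)

lemma LEAFIT_run:
  assumes C3: "Ctx3 s" and k: "nreg s 3 = k" "0 < k" "k \<le> nn" and stk: "nreg s 11 = Suc k" and km: "nreg s 15 = k - 1"
    and lf: "kd (k - 1) = 0" and st: "\<forall>q. nmem s 11 q \<le> k" and pv: "PVok s" and qs: "rreg s 2 = QSv (k - 1)"
  shows "ex_run FF LEAFIT s KLF (Mid k)"
proof -
  define l where "l = k - 1"
  have ln: "l < nn" using k by (simp add: l_def)
  have CB: "CtxB s" using C3 by (simp add: Ctx3_def)
  define sA where "sA = run FF LPRE s"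
  have A: "nreg sA 4 = l" "nreg sA 5 = PARF l" "rreg sA 5 = Pr (pth l)"
    using CB C3 km pv lf ln unfolding sA_def l_def by (auto simp: LPRE_def CtxB_def Ctx3_def PVok_def)
  have frA: "FR LPRE s sA" unfolding sA_def by (rule run_frm[OF LPRE_lf])
  have frA': "frm {4,5} {5} {} {} s sA" using frA unfolding FR_def by (rule frm_mono) (auto simp: LPRE_def)
  have nA: "nmem sA 11 = nmem s 11" using frA' by (simp add: frm_def)
  have stA: "nmem sA 11 q \<le> k" "nmem sA 11 q \<noteq> Suc k" "nmem sA 11 q \<le> Suc k" for q
  proof -
    show "nmem sA 11 q \<le> k" using st nA by simp
    then show "nmem sA 11 q \<noteq> Suc k" "nmem sA 11 q \<le> Suc k" by simp_all
  qed
  have IG0: "IG k l sA [] sA"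
    unfolding IG_def Gvalid_def using C3 frA' A k stk stA ln
    by (auto simp: frm_refl FR_def Ctx3_def CtxB_def frm_def)
  have W: "ex_run FF (WhileN 0 5 GB) sA (length (pth (nreg sA 4)) * (clen GB + 2) + 2)
      (\<lambda>s'. (\<exists>suf. IG k l sA suf s') \<and> \<not> nreg s' 0 < nreg s' 5)"
  proof (rule ex_run_while[where \<mu> = "\<lambda>s. length (pth (nreg s 4))" and I = "\<lambda>s. \<exists>suf. IG k l sA suf s"])
    show "\<exists>suf. IG k l sA suf sA" using IG0 by blast
    fix s assume "\<exists>suf. IG k l sA suf s" "nreg s 0 < nreg s 5"
    then obtain suf where "IG k l sA suf s" "0 < nreg s 5" by (auto simp: IG_def Ctx3_def CtxB_def)
    from GB_step[OF this] show "ex_run FF GB s (clen GB) (\<lambda>s'. (\<exists>suf. IG k l sA suf s') \<and> length (pth (nreg s' 4)) < length (pth (nreg s 4)))"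
      by (intro ex_run_lf GB_lf) blast
  qed
  have W2: "ex_run FF (WhileN 0 5 GB ;; (ONEITER ;; LPOST)) sA ((length (pth (nreg sA 4)) * (clen GB + 2) + 2) + (KIB + clen LPOST)) (Mid k)"
  proof (rule ex_run_seq[OF W])
    fix sB assume "(\<exists>suf. IG k l sA suf sB) \<and> \<not> nreg sB 0 < nreg sB 5"
    then obtain suf where IG: "IG k l sA suf sB" and pr0: "\<not> nreg sB 0 < nreg sB 5" by blast
    have C3B: "Ctx3 sB" and CBB: "CtxB sB" using IG by (auto simp: IG_def Ctx3_def)
    obtain cur where cur: "nreg sB 4 = cur" "cur < nn" using IG by (auto simp: IG_def)
    have "PARF cur = 0" using IG pr0 cur CBB by (simp add: IG_def CtxB_def)
    then have "parf cur = None" using PARF_Some[OF cur(2)] by (cases "parf cur") auto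
    then have "pth cur = []" using node_par(1)[OF cur(2)] by simp
    then have suf: "suf = pth l" using IG cur by (simp add: IG_def)
    have frB: "frm {6,7,8,13,14,17,4,5} {6,7,8} {11,12,13} {4,5} sA sB" by (rule FR_GBW) (use IG in \<open>simp add: IG_def\<close>)
    have pbB: "rreg sB 5 = Pr (pth l)" using frB A by (simp add: frm_def)
    have OIPB: "OIP k (pth l) sB"
      using IG suf pbB node_feats(1)[OF ln] k unfolding OIP_def IG_def by auto
    show "ex_run FF (ONEITER ;; LPOST) sB (KIB + clen LPOST) (Mid k)"
    proof (rule ex_run_seq_lf2[OF ONEITER_run[OF OIPB] LPOST_lf])
      fix sC assume a: "IL k (pth l) sB sC \<and> nreg sC 2 = nn"
      have frC: "frm {2,5,7,8,9,12,13,14,17} {1,4,6,7,8,9,12,13,14,15,17,18,19,20} {14,15} {6,7,8,9,10,11} sB sC"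
        by (rule FR_ONE) (use a in \<open>simp add: IL_def\<close>)
      have OC: "OIP k (pth l) sC" using a by (simp add: IL_def)
      have CBC: "CtxB sC" using OC by (simp add: OIP_def Ctx3_def)
      have accC: "rreg sC 1 = (\<Sum>m<nn. w m * Pr (pth l @ pth m))" using a by (simp add: IL_def)
      have pvC: "rmem sC 11 = rmem sB 11 \<and> rreg sC 4 = rreg sB 4" using a k by (simp add: IL_def)
      have stC: "\<forall>q. nmem sC 11 q \<le> Suc k" using IG frC by (simp add: IG_def frm_def)
      have regs: "rreg sC 2 = rreg s 2" "rreg sC 3 = rreg s 3" "rreg sC 4 = rreg s 4" "rmem sC 11 = rmem s 11"
        using frC frB frA' pvC by (auto simp: frm_def)
      have vl: "rmem sC 0 l = w l" using CBC ln lf w_leaf[of l] by (simp add: CtxB_def s0_rmem l_def)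
      have kl: "nreg sC 15 = l" using frC frB frA' km by (simp add: frm_def l_def)
      have kS: "k = Suc l" using k by (simp add: l_def)
      have qsk: "QSv k = QSv l + w l * (\<Sum>m<nn. w m * Pr (pth l @ pth m))"
        unfolding kS QSv_def by simp
      show "Mid k (run FF LPOST sC)"
        using OC stC regs pv qs vl kl accC qsk
        unfolding Mid_def OIP_def Ctx3_def CtxB_def PVok_def
        by (simp add: LPOST_def l_def)
    qed
  qed
  have E: "ex_run FF LEAFIT s (clen LPRE + ((length (pth (nreg sA 4)) * (clen GB + 2) + 2) + (KIB + clen LPOST))) (Mid k)"
    unfolding LEAFIT_def using ex_run_seq_lf[OF LPRE_lf W2[unfolded sA_def]] by (simp add: sA_def)
  have L: "length (pth (nreg sA 4)) * (clen GB + 2) \<le> nn * (clen GB + 2)"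
    using A pth_len[OF ln] ln by (intro mult_right_mono) auto
  show ?thesis unfolding KLF_def by (rule ex_run_mono[OF E]) (use L in auto)
qed


definition "KZ = 1 + (KIB + 1)"

lemma ZEROIT_run:
  assumes C3: "Ctx3 s" and k: "nreg s 3 = 0" and stk: "nreg s 11 = 1" and st: "\<forall>q. nmem s 11 q \<le> 0"
    and fx: "rreg s 4 = 0" and qs: "rreg s 2 = QSv 0"
  shows "ex_run FF ZEROIT s KZ (Mid 0)"
proof -
  define sB where "sB = run FF (B (RConst 5 1)) s"
  have st0: "nmem s 11 q = 0" for q using st by simp
  have OB: "OIP 0 [] sB" using C3 k stk st0 unfolding sB_def OIP_def Ctx3_def CtxB_def Gvalid_def
    by (simp add: Pr_Nil, auto)
  have E: "ex_run FF (ONEITER ;; B (RAdd 3 1 11)) sB (KIB + clen (B (RAdd 3 1 11))) (Mid 0)"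
  proof (rule ex_run_seq_lf2[OF ONEITER_run[OF OB]])
    show "lf (B (RAdd 3 1 11))" by simp
    fix sC assume a: "IL 0 [] sB sC \<and> nreg sC 2 = nn"
    have frC: "frm {2,5,7,8,9,12,13,14,17} {1,4,6,7,8,9,12,13,14,15,17,18,19,20} {14,15} {6,7,8,9,10,11} sB sC"
      by (rule FR_ONE) (use a in \<open>simp add: IL_def\<close>)
    have OC: "OIP 0 [] sC" using a by (simp add: IL_def)
    have ILC: "(\<forall>c<nn. kd c = 0 \<longrightarrow> rmem sC 11 c = Pr (pth c)) \<and> rreg sC 4 = rreg sB 4 + (\<Sum>m<nn. w m * chi (ind (pth m) x))"
       "rreg sC 1 = (\<Sum>m<nn. w m * Pr ([] @ pth m))" using a by (auto simp: IL_def)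
    have regs: "rreg sC 2 = rreg s 2" "rreg sB 4 = rreg s 4" "nmem sC 11 = nmem s 11"
      using frC by (auto simp: frm_def sB_def)
    show "Mid 0 (run FF (B (RAdd 3 1 11)) sC)"
      using OC ILC regs fx qs st0 unfolding Mid_def OIP_def Ctx3_def CtxB_def PVok_def
      by (simp add: A0_def FX0_def)
  qed
  have "ex_run FF ZEROIT s (1 + (KIB + 1)) (Mid 0)"
    unfolding ZEROIT_def using ex_run_seq_lf[of "B (RConst 5 1)" FF "ONEITER ;; B (RAdd 3 1 11)" s] E
    by (simp add: sB_def)
  then show ?thesis by (simp add: KZ_def)
qed

definition I3 :: "mstate \<Rightarrow> bool" where
  "I3 s \<longleftrightarrow> Ctx3 s \<and> nreg s 3 \<le> Suc nn \<and> (\<forall>q. nmem s 11 q \<le> nreg s 3) \<and> (0 < nreg s 3 \<longrightarrow> PVok s) \<and>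
     (nreg s 3 = 0 \<longrightarrow> rreg s 4 = 0) \<and> rreg s 2 = QSv (nreg s 3 - 1)"

lemma KPRE_lf: "lf KPRE" by (simp add: KPRE_def)

definition "KOB = 1 + ((clen KPRE + (KLF + 2) + KZ + 2) + 1)"

lemma OB_step:
  assumes I: "I3 s" and lt: "nreg s 3 < nreg s 16"
  shows "ex_run FF OB s KOB (\<lambda>s'. I3 s' \<and> Suc nn - nreg s' 3 < Suc nn - nreg s 3)"
proof -
  have C3: "Ctx3 s" and CB: "CtxB s" using I by (auto simp: I3_def Ctx3_def)
  obtain k where k: "nreg s 3 = k" "k < Suc nn" using lt CB by (auto simp: CtxB_def)
  define sa where "sa = run FF (B (NAdd 11 3 10)) s"
  have Ca: "Ctx3 sa" "nreg sa 3 = k" "nreg sa 11 = Suc k" "nmem sa 11 = nmem s 11" "rreg sa = rreg s" "rmem sa = rmem s"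
    using C3 k unfolding sa_def Ctx3_def CtxB_def by auto
  have mid: "ex_run FF (IfN 0 3 KPOS ZEROIT) sa (clen KPRE + (KLF + 2) + KZ + 2) (Mid k)"
  proof (rule ex_run_ifn)
    assume pos: "nreg sa 0 < nreg sa 3"
    then have k0: "0 < k" using Ca CB by (simp add: Ctx3_def CtxB_def)
    define sb where "sb = run FF KPRE sa"
    have Cb: "Ctx3 sb" "nreg sb 3 = k" "nreg sb 11 = Suc k" "nmem sb 11 = nmem s 11" "rreg sb = rreg s" "rmem sb = rmem s"
      "nreg sb 15 = k - 1" "nreg sb 8 = kd (k - 1)"
      using Ca k k0 unfolding sb_def Ctx3_def CtxB_def by (auto simp: KPRE_def s0_nmem)
    have pv: "PVok sb" using I k k0 Cb unfolding I3_def PVok_def by simp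
    have qs: "rreg sb 2 = QSv (k - 1)" using I k Cb by (simp add: I3_def)
    have st: "\<forall>q. nmem sb 11 q \<le> k" using I k Cb by (simp add: I3_def)
    have "ex_run FF (IfN 0 8 SKIP LEAFIT) sb (KLF + 2) (Mid k)"
    proof (rule ex_run_ifn)
      assume "nreg sb 0 < nreg sb 8"
      then have "0 < kd (k - 1)" using Cb by (simp add: Ctx3_def CtxB_def)
      then have ki: "kd (k - 1) = 1" using kd_cases by (metis less_numeral_extra(3))
      have kS: "k = Suc (k - 1)" using k0 by simp
      have "QSv k = QSv (k - 1)" using w_internal[OF ki] by (subst kS, simp add: QSv_def)
      then have M: "Mid k sb" using Cb pv qs st unfolding Mid_def by (auto intro: le_SucI)
      have "ex_run FF SKIP sb 0 (Mid k)" using ex_run_lf[of SKIP "Mid k" FF sb] M by simp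
      then show "ex_run FF SKIP sb KLF (Mid k)" by (rule ex_run_mono) auto
    next
      assume "\<not> nreg sb 0 < nreg sb 8"
      then have lf: "kd (k - 1) = 0" using Cb by (simp add: Ctx3_def CtxB_def)
      show "ex_run FF LEAFIT sb KLF (Mid k)"
        by (rule LEAFIT_run[OF Cb(1) Cb(2) k0 _ Cb(3) Cb(7) lf st pv qs]) (use k k0 in auto)
    qed
    then have "ex_run FF KPOS sa (clen KPRE + (KLF + 2)) (Mid k)"
      unfolding KPOS_def sb_def by (rule ex_run_seq_lf[OF KPRE_lf])
    then show "ex_run FF KPOS sa (clen KPRE + (KLF + 2) + KZ) (Mid k)" by (rule ex_run_mono) auto
  next
    assume "\<not> nreg sa 0 < nreg sa 3"
    then have k0: "k = 0" using Ca CB by (simp add: Ctx3_def CtxB_def)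
    have Z: "ex_run FF ZEROIT sa KZ (Mid 0)"
      by (rule ZEROIT_run) (use Ca I k k0 in \<open>auto simp: I3_def\<close>)
    show "ex_run FF ZEROIT sa (clen KPRE + (KLF + 2) + KZ) (Mid k)" by (rule ex_run_mono[OF Z]) (use k0 in auto)
  qed
  have E: "ex_run FF (IfN 0 3 KPOS ZEROIT ;; B (NAdd 3 3 10)) sa ((clen KPRE + (KLF + 2) + KZ + 2) + clen (B (NAdd 3 3 10)))
      (\<lambda>s'. I3 s' \<and> Suc nn - nreg s' 3 < Suc nn - nreg s 3)"
  proof (rule ex_run_seq_lf2[OF mid])
    show "lf (B (NAdd 3 3 10))" by simp
    fix s1 assume M: "Mid k s1"
    then show "I3 (run FF (B (NAdd 3 3 10)) s1) \<and> Suc nn - nreg (run FF (B (NAdd 3 3 10)) s1) 3 < Suc nn - nreg s 3"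
      using k unfolding Mid_def I3_def Ctx3_def CtxB_def PVok_def by auto
  qed
  have "ex_run FF OB s (clen (B (NAdd 11 3 10)) + ((clen KPRE + (KLF + 2) + KZ + 2) + clen (B (NAdd 3 3 10))))
      (\<lambda>s'. I3 s' \<and> Suc nn - nreg s' 3 < Suc nn - nreg s 3)"
    unfolding OB_def by (rule ex_run_seq_lf[OF _ E[unfolded sa_def]]) simp
  then show ?thesis unfolding KOB_def by simp
qed


lemma PH3_run:
  assumes "I2 s" "nreg s 2 = nn"
  shows "ex_run FF PH3 s (1 + (Suc nn * (KOB + 2) + 2)) (\<lambda>s'. I3 s' \<and> nreg s' 3 = Suc nn)"
proof -
  let ?s1 = "run FF (B (NConst 3 0)) s"
  have I: "I3 ?s1" using assms by (simp add: I2_def I3_def Ctx3_def CtxB_def QSv_def)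
  have W: "ex_run FF (WhileN 3 16 OB) ?s1 ((Suc nn - nreg ?s1 3) * (KOB + 2) + 2) (\<lambda>s'. I3 s' \<and> \<not> nreg s' 3 < nreg s' 16)"
    by (rule ex_run_while[where \<mu> = "\<lambda>s. Suc nn - nreg s 3" and I = I3, OF I]) (rule OB_step)
  have E: "ex_run FF PH3 s (clen (B (NConst 3 0)) + ((Suc nn - nreg ?s1 3) * (KOB + 2) + 2)) (\<lambda>s'. I3 s' \<and> \<not> nreg s' 3 < nreg s' 16)"
    unfolding PH3_def using ex_run_seq_lf[OF _ W] by simp
  show ?thesis by (rule ex_run_mono[OF E]) (auto simp: I3_def Ctx3_def CtxB_def)
qed

lemma FIN_ok:
  assumes "I3 s" "nreg s 3 = Suc nn"
  shows "rreg (run FF FIN s) 0 = PG2 ts x S D"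
proof -
  have "rreg s 2 = Q0" "rreg s 3 = A0" "rreg s 4 = FX0" using assms by (auto simp: I3_def PVok_def QSv_def Q0_def)
  then show ?thesis by (simp add: FIN_def PG2_eq power2_eq_square)
qed

definition "KT = clen INIT + ((1 + (nn * (clen P1B + 2) + 2)) + ((1 + (nn * (K2 + 2) + 2)) + ((1 + (Suc nn * (KOB + 2) + 2)) + clen FIN)))"

lemma INIT_lf: "lf INIT" by (simp add: INIT_def)
lemma FIN_lf: "lf FIN" by (simp add: FIN_def)

lemma PROG_run: "ex_run FF PROG s0 KT (\<lambda>s'. rreg s' 0 = PG2 ts x S D)"
proof -
  have P3: "ex_run FF (PH3 ;; FIN) s (1 + (Suc nn * (KOB + 2) + 2) + clen FIN) (\<lambda>s'. rreg s' 0 = PG2 ts x S D)"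
    if "I2 s" "nreg s 2 = nn" for s
    by (rule ex_run_seq_lf2[OF PH3_run[OF that] FIN_lf]) (auto intro: FIN_ok)
  have P2: "ex_run FF (PH2 ;; (PH3 ;; FIN)) s ((1 + (nn * (K2 + 2) + 2)) + (1 + (Suc nn * (KOB + 2) + 2) + clen FIN)) (\<lambda>s'. rreg s' 0 = PG2 ts x S D)"
    if "I1 s" "nreg s 2 = nn" for s
    by (rule ex_run_seq[OF PH2_run[OF that]]) (use P3 in blast)
  have P1: "ex_run FF (PH1 ;; (PH2 ;; (PH3 ;; FIN))) s ((1 + (nn * (clen P1B + 2) + 2)) + ((1 + (nn * (K2 + 2) + 2)) + (1 + (Suc nn * (KOB + 2) + 2) + clen FIN))) (\<lambda>s'. rreg s' 0 = PG2 ts x S D)"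
    if "CtxB s" "nmem s 7 = (\<lambda>_. 0)" "nmem s 8 = (\<lambda>_. 0)" "nmem s 11 = (\<lambda>_. 0)" "rreg s 2 = 0" "rreg s 4 = 0" for s
    by (rule ex_run_seq[OF PH1_run[OF that]]) (use P2 in blast)
  have "ex_run FF PROG s0 (clen INIT + ((1 + (nn * (clen P1B + 2) + 2)) + ((1 + (nn * (K2 + 2) + 2)) + (1 + (Suc nn * (KOB + 2) + 2) + clen FIN)))) (\<lambda>s'. rreg s' 0 = PG2 ts x S D)"
    unfolding PROG_def by (rule ex_run_seq_lf[OF INIT_lf P1]) (use INIT_props in auto)
  then show ?thesis unfolding KT_def by (simp add: add.assoc)
qed


end

lemma lin1: "b + (n * (a + 2) + 2) + c \<le> (a + b + c + 4) * Suc (n::nat)"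
  by (simp add: algebra_simps)

lemma quad1:
  assumes "K \<le> \<alpha> * Suc n"
  shows "Suc n * (K + 2) \<le> (\<alpha> + 2) * (Suc n * Suc (n::nat))"
proof -
  have "Suc n * (K + 2) \<le> Suc n * (\<alpha> * Suc n + 2)" using assms by (intro mult_le_mono2) simp
  also have "\<dots> \<le> Suc n * ((\<alpha> + 2) * Suc n)" by (intro mult_le_mono2) (simp add: algebra_simps)
  finally show ?thesis by (simp add: algebra_simps)
qed

lemma quad0: "n * K \<le> Suc n * (K::nat)" by simp

definition "aI = clen OPRE + clen IB + 4"
definition "a2 = clen P2PRE + clen P2POST + clen WB + 4"
definition "aL = clen LPRE + clen LPOST + clen GB + 4 + aI"
definition "aO = clen KPRE + aL + aI + 2 + 6"
definition "CC = clen INIT + (clen P1B + 2) + (a2 + 2) + (aO + 2) + clen FIN + 20"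

context pg
begin

lemma KT_bound: "KT \<le> CC * (Suc nn * Suc nn)"
proof -
  let ?N = "Suc nn"
  have b2: "K2 \<le> a2 * ?N" unfolding K2_def a2_def by (simp add: algebra_simps)
  have bI: "KIB \<le> aI * ?N" unfolding KIB_def aI_def by (simp add: algebra_simps)
  have bL: "KLF \<le> aL * ?N"
  proof -
    have "KLF = clen LPRE + (nn * (clen GB + 2) + 2) + (clen LPOST + KIB)" by (simp add: KLF_def)
    also have "\<dots> \<le> (clen GB + clen LPRE + clen LPOST + 4) * ?N + aI * ?N"
    proof -
      have "clen LPRE + (nn * (clen GB + 2) + 2) + clen LPOST \<le> (clen GB + clen LPRE + clen LPOST + 4) * ?N"
        by (simp add: algebra_simps)
      then show ?thesis using bI by linarith
    qed
    finally show ?thesis by (simp add: aL_def algebra_simps)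
  qed
  have bO: "KOB \<le> aO * ?N"
  proof -
    have "KOB = clen KPRE + KLF + KIB + 8" by (simp add: KOB_def KZ_def)
    also have "\<dots> \<le> clen KPRE * ?N + aL * ?N + aI * ?N + 8 * ?N"
      using bL bI by (intro add_mono) (auto simp: algebra_simps)
    finally show ?thesis by (simp add: aO_def algebra_simps)
  qed
  have q1: "nn * (clen P1B + 2) \<le> (clen P1B + 2) * (?N * ?N)"
  proof -
    have "nn * (clen P1B + 2) \<le> ?N * (clen P1B + 2)" by simp
    also have "\<dots> \<le> (?N * ?N) * (clen P1B + 2)" by (intro mult_le_mono1) simp
    finally show ?thesis by (simp add: mult.commute)
  qed
  have q2: "nn * (K2 + 2) \<le> (a2 + 2) * (?N * ?N)" using quad1[OF b2] quad0[of nn "K2 + 2"] by linarith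
  have q3: "?N * (KOB + 2) \<le> (aO + 2) * (?N * ?N)" using quad1[OF bO] .
  have one: "1 \<le> ?N * ?N" by simp
  have c1: "clen INIT \<le> clen INIT * (?N * ?N)" "clen FIN \<le> clen FIN * (?N * ?N)" by simp_all
  have "KT \<le> clen INIT * (?N * ?N) + (clen P1B + 2) * (?N * ?N) + (a2 + 2) * (?N * ?N) + (aO + 2) * (?N * ?N)
             + clen FIN * (?N * ?N) + 20 * (?N * ?N)"
    unfolding KT_def using q1 q2 q3 one c1 by linarith
  also have "\<dots> = CC * (?N * ?N)" by (simp add: CC_def algebra_simps)
  finally show ?thesis .
qed

end

context pg
begin

lemma main_result:
  "let s = (step (compile 0 PROG @ [Halt]) (cdf_oracle D) ^^ (CC * (ens_size ts + 1)\<^sup>2)) (init_state d ts x S)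
   in halted (compile 0 PROG @ [Halt]) s \<and> rreg s 0 = PG2 ts x S D"
proof -
  obtain k s' where r: "bs (cdf_oracle D) PROG s0 k s'" "k \<le> KT" "rreg s' 0 = PG2 ts x S D"
    using PROG_run unfolding ex_run_def by blast
  have kb: "k \<le> CC * (ens_size ts + 1)\<^sup>2" using r(2) KT_bound by (simp add: power2_eq_square)
  have pc0: "pc s0 = 0" by (simp add: s0_basic)
  have ct: "(step (compile 0 PROG @ [Halt]) (cdf_oracle D) ^^ (CC * (ens_size ts + 1)\<^sup>2)) s0 = s'\<lparr>pc := clen PROG\<rparr> \<and>
     halted (compile 0 PROG @ [Halt]) (s'\<lparr>pc := clen PROG\<rparr>)"
    by (rule compile_top[OF r(1) pc0 kb])
  have ii: "init_state d ts x S = s0" by (simp only: s0_def)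
  show ?thesis
    unfolding Let_def ii ct[THEN conjunct1] using ct r(3) by simp
qed

end

theorem theorem3p1:
  "\<exists>(P :: instr list) (c :: nat).
     \<forall>(d :: nat) (ts :: dtree list) (x :: nat \<Rightarrow> real) (S :: nat set) (D :: nat \<Rightarrow> real measure).
       wf_ensemble d ts \<and> S \<subseteq> {1..d} \<and>
       (\<forall>i\<in>S. prob_space (D i) \<and> sets (D i) = sets borel) \<longrightarrow>
       (let s = (step P (cdf_oracle D) ^^ (c * (ens_size ts + 1)\<^sup>2)) (init_state d ts x S)
        in halted P s \<and> rreg s 0 = PG2 ts x S D)"
proof (intro exI[of _ "compile 0 PROG @ [Halt]"] exI[of _ CC] allI impI)
  fix d ts x S and D :: "nat \<Rightarrow> real measure"
  assume A: "wf_ensemble d ts \<and> S \<subseteq> {1..d} \<and> (\<forall>i\<in>S. prob_space (D i) \<and> sets (D i) = sets borel)"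
  have P: "pg d ts S D" using A unfolding pg_def by blast
  show "let s = (step (compile 0 PROG @ [Halt]) (cdf_oracle D) ^^ (CC * (ens_size ts + 1)\<^sup>2)) (init_state d ts x S)
        in halted (compile 0 PROG @ [Halt]) s \<and> rreg s 0 = PG2 ts x S D"
    by (rule pg.main_result[OF P])
qed

end
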